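(* Let $p$ be a prime and let $\mathcal{F}$ be a fusion system (not necessarily saturated) on a finite $p$-group $S$. Then there exists a left semicharacteristic biset $X$ for $\mathcal{F}$ which contains a subbiset isomorphic to $S\times_{(S,\mathrm{id})} S$.
   Context: A fusion system $\mathcal{F}$ on a finite $p$-group $S$ is a category whose objects are the subgroups of $S$, whose morphism sets $\mathrm{Hom}_{\mathcal{F}}(P,Q)$ are sets of injective group homomorphisms $P\to Q$, such that every map $u\mapsto sus^{-1}$ ($s\in S$, $sPs^{-1}\le Q$) lies in $\mathrm{Hom}_{\mathcal{F}}(P,Q)$, and every $\varphi\in\mathrm{Hom}_{\mathcal{F}}(P,Q)$ induces an isomorphism $P\to\varphi(P)$ in $\mathcal{F}$ whose inverse is also in $\mathcal{F}$; no saturation is assumed. An $S$-$S$-biset is a set with commuting left and right $S$-actions. For $Q\le S$ and an injective homomorphism $\varphi\colon Q\to S$, $S\times_{(Q,\varphi)}S$ denotes the transitive $S$-$S$-biset $(S\times S)/\!\sim$ where $(xu,y)\sim(x,\varphi(u)y)$ for $x,y\in S$, $u\in Q$, with $S$ acting by left multiplication on the first factor and right multiplication on the second. For an $S$-$S$-biset $X$ and $Q\le S$, ${}_QX$ is the $Q$-$S$-biset obtained by restricting the left action to $Q$, and for $\varphi\colon Q\to S$, ${}_\varphi X$ is the $Q$-$S$-biset with the same underlying set, the same right action, and left action $u\cdot x=\varphi(u)x$. A left semicharacteristic biset for $\mathcal{F}$ is a finite $S$-$S$-biset $X$ such that: (1) ($\mathcal{F}$-generated) every transitive subbiset of $X$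 is isomorphic to $S\times_{(Q,\varphi)}S$ for some $Q\le S$ and some $\varphi\in\mathrm{Hom}_{\mathcal{F}}(Q,S)$; (2) (left $\mathcal{F}$-stable) ${}_QX\cong{}_\varphi X$ as $Q$-$S$-bisets for every $Q\le S$ and every $\varphi\in\mathrm{Hom}_{\mathcal{F}}(Q,S)$. *)

theory Defs
  imports "HOL-Algebra.Algebra"
begin

definition finite_p_group :: "nat \<Rightarrow> ('a, 'm) monoid_scheme \<Rightarrow> bool" where
  "finite_p_group p S \<longleftrightarrow> group S \<and> finite (carrier S) \<and> (\<exists>n. card (carrier S) = p ^ n)"

text \<open>A (not necessarily saturated) fusion system on S.  F P Q is the set of
  morphisms Hom_F(P,Q); morphisms are functions extensional on their domain.\<close>
definition fusion_system :: "('a, 'm) monoid_scheme \<Rightarrow> ('a set \<Rightarrow> 'a set \<Rightarrow> ('a \<Rightarrow> 'a) set) \<Rightarrow> bool" where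
  "fusion_system S F \<longleftrightarrow>
     (\<forall>P Q. F P Q \<noteq> {} \<longrightarrow> subgroup P S \<and> subgroup Q S) \<and>
     (\<forall>P Q. \<forall>\<phi>\<in>F P Q. \<phi> \<in> extensional P \<and> \<phi> \<in> hom (S\<lparr>carrier := P\<rparr>) S \<and>
                        \<phi> ` P \<subseteq> Q \<and> inj_on \<phi> P) \<and>
     (\<forall>P Q s. subgroup P S \<longrightarrow> subgroup Q S \<longrightarrow> s \<in> carrier S \<longrightarrow>
        (\<lambda>u. s \<otimes>\<^bsub>S\<^esub> u \<otimes>\<^bsub>S\<^esub> inv\<^bsub>S\<^esub> s) ` P \<subseteq> Q \<longrightarrow>
        restrict (\<lambda>u. s \<otimes>\<^bsub>S\<^esub> u \<otimes>\<^bsub>S\<^esub> inv\<^bsub>S\<^esub> s) P \<in> F P Q) \<and>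
     (\<forall>P Q \<phi>. \<phi> \<in> F P Q \<longrightarrow>
        \<phi> \<in> F P (\<phi> ` P) \<and> restrict (inv_into P \<phi>) (\<phi> ` P) \<in> F (\<phi> ` P) P) \<and>
     (\<forall>P Q R \<phi> \<psi>. \<phi> \<in> F P Q \<longrightarrow> \<psi> \<in> F Q R \<longrightarrow> restrict (\<psi> \<circ> \<phi>) P \<in> F P R)"

definition biset :: "('a, 'm) monoid_scheme \<Rightarrow> 'b set \<Rightarrow> ('a \<Rightarrow> 'b \<Rightarrow> 'b) \<Rightarrow> ('b \<Rightarrow> 'a \<Rightarrow> 'b) \<Rightarrow> bool" where
  "biset S BX l r \<longleftrightarrow>
     (\<forall>x\<in>BX. \<forall>s\<in>carrier S. l s x \<in> BX \<and> r x s \<in> BX) \<and>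
     (\<forall>x\<in>BX. l (one S) x = x \<and> r x (one S) = x) \<and>
     (\<forall>x\<in>BX. \<forall>s\<in>carrier S. \<forall>t\<in>carrier S.
        l s (l t x) = l (s \<otimes>\<^bsub>S\<^esub> t) x \<and> r (r x s) t = r x (s \<otimes>\<^bsub>S\<^esub> t) \<and>
        l s (r x t) = r (l s x) t)"

definition biset_iso :: "'a set \<Rightarrow> 'a set \<Rightarrow> 'b set \<Rightarrow> ('a \<Rightarrow> 'b \<Rightarrow> 'b) \<Rightarrow> ('b \<Rightarrow> 'a \<Rightarrow> 'b)
     \<Rightarrow> 'c set \<Rightarrow> ('a \<Rightarrow> 'c \<Rightarrow> 'c) \<Rightarrow> ('c \<Rightarrow> 'a \<Rightarrow> 'c) \<Rightarrow> bool" where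
  "biset_iso L R BX l r Y l' r' \<longleftrightarrow>
     (\<exists>f. bij_betw f BX Y \<and>
          (\<forall>x\<in>BX. \<forall>a\<in>L. f (l a x) = l' a (f x)) \<and>
          (\<forall>x\<in>BX. \<forall>b\<in>R. f (r x b) = r' (f x) b))"

definition subbiset :: "('a, 'm) monoid_scheme \<Rightarrow> 'b set \<Rightarrow> ('a \<Rightarrow> 'b \<Rightarrow> 'b) \<Rightarrow> ('b \<Rightarrow> 'a \<Rightarrow> 'b) \<Rightarrow> 'b set \<Rightarrow> bool" where
  "subbiset S BX l r Y \<longleftrightarrow> Y \<subseteq> BX \<and>
     (\<forall>y\<in>Y. \<forall>s\<in>carrier S. l s y \<in> Y \<and> r y s \<in> Y)"

definition transitive_subbiset :: "('a, 'm) monoid_scheme \<Rightarrow> 'b set \<Rightarrow> ('a \<Rightarrow> 'b \<Rightarrow> 'b) \<Rightarrow> ('b \<Rightarrow> 'a \<Rightarrow> 'b) \<Rightarrow> 'b set \<Rightarrow> bool" where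
  "transitive_subbiset S BX l r Y \<longleftrightarrow> subbiset S BX l r Y \<and> Y \<noteq> {} \<and>
     (\<forall>y\<in>Y. \<forall>z\<in>Y. \<exists>s\<in>carrier S. \<exists>t\<in>carrier S. z = l s (r y t))"

text \<open>The transitive biset S \<times>_(Q,\<phi>) S = (S \<times> S)/\<sim>, (x u, y) \<sim> (x, \<phi>(u) y).\<close>
definition tb_rel :: "('a, 'm) monoid_scheme \<Rightarrow> 'a set \<Rightarrow> ('a \<Rightarrow> 'a) \<Rightarrow> (('a \<times> 'a) \<times> ('a \<times> 'a)) set" where
  "tb_rel S Q \<phi> = {((x \<otimes>\<^bsub>S\<^esub> u, y), (x, \<phi> u \<otimes>\<^bsub>S\<^esub> y)) | x y u.
                      x \<in> carrier S \<and> y \<in> carrier S \<and> u \<in> Q}"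

definition tb_carrier :: "('a, 'm) monoid_scheme \<Rightarrow> 'a set \<Rightarrow> ('a \<Rightarrow> 'a) \<Rightarrow> ('a \<times> 'a) set set" where
  "tb_carrier S Q \<phi> = (carrier S \<times> carrier S) // ((tb_rel S Q \<phi> \<union> (tb_rel S Q \<phi>)\<inverse>)\<^sup>*)"

definition tb_left :: "('a, 'm) monoid_scheme \<Rightarrow> 'a \<Rightarrow> ('a \<times> 'a) set \<Rightarrow> ('a \<times> 'a) set" where
  "tb_left S s C = (\<lambda>(x, y). (s \<otimes>\<^bsub>S\<^esub> x, y)) ` C"

definition tb_right :: "('a, 'm) monoid_scheme \<Rightarrow> ('a \<times> 'a) set \<Rightarrow> 'a \<Rightarrow> ('a \<times> 'a) set" where
  "tb_right S C t = (\<lambda>(x, y). (x, y \<otimes>\<^bsub>S\<^esub> t)) ` C"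

definition left_semichar_biset :: "('a, 'm) monoid_scheme \<Rightarrow> ('a set \<Rightarrow> 'a set \<Rightarrow> ('a \<Rightarrow> 'a) set)
     \<Rightarrow> 'b set \<Rightarrow> ('a \<Rightarrow> 'b \<Rightarrow> 'b) \<Rightarrow> ('b \<Rightarrow> 'a \<Rightarrow> 'b) \<Rightarrow> bool" where
  "left_semichar_biset S F BX l r \<longleftrightarrow>
     biset S BX l r \<and> finite BX \<and>
     (\<forall>Y. transitive_subbiset S BX l r Y \<longrightarrow>
        (\<exists>Q \<phi>. subgroup Q S \<and> \<phi> \<in> F Q (carrier S) \<and>
           biset_iso (carrier S) (carrier S) Y l r (tb_carrier S Q \<phi>) (tb_left S) (tb_right S))) \<and>
     (\<forall>Q \<phi>. subgroup Q S \<longrightarrow> \<phi> \<in> F Q (carrier S) \<longrightarrow>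
        biset_iso Q (carrier S) BX l r BX (\<lambda>u x. l (\<phi> u) x) r)"

end

theory Submission
  imports Defs
begin



definition stab_of :: "('g,'c) monoid_scheme \<Rightarrow> ('g \<Rightarrow> 'x \<Rightarrow> 'x) \<Rightarrow> 'x \<Rightarrow> 'g set" where
  "stab_of H a x = {g \<in> carrier H. a g x = x}"

definition fix_of :: "('g \<Rightarrow> 'x \<Rightarrow> 'x) \<Rightarrow> 'x set \<Rightarrow> 'g set \<Rightarrow> 'x set" where
  "fix_of a A K = {x \<in> A. \<forall>g\<in>K. a g x = x}"

definition is_act :: "('g,'c) monoid_scheme \<Rightarrow> ('g \<Rightarrow> 'x \<Rightarrow> 'x) \<Rightarrow> 'x set \<Rightarrow> bool" where
  "is_act H a A \<longleftrightarrow> (\<forall>g\<in>carrier H. \<forall>x\<in>A. a g x \<in> A) \<and> (\<forall>x\<in>A. a \<one>\<^bsub>H\<^esub> x = x) \<and>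
     (\<forall>g\<in>carrier H. \<forall>h\<in>carrier H. \<forall>x\<in>A. a g (a h x) = a (g \<otimes>\<^bsub>H\<^esub> h) x)"

definition orb_of :: "('g,'c) monoid_scheme \<Rightarrow> ('g \<Rightarrow> 'x \<Rightarrow> 'x) \<Rightarrow> 'x \<Rightarrow> 'x set" where
  "orb_of H a x = (\<lambda>g. a g x) ` carrier H"

context group
begin

lemma act_closed: "is_act G a A \<Longrightarrow> g \<in> carrier G \<Longrightarrow> x \<in> A \<Longrightarrow> a g x \<in> A"
  unfolding is_act_def by blast

lemma act_one: "is_act G a A \<Longrightarrow> x \<in> A \<Longrightarrow> a \<one> x = x"
  unfolding is_act_def by blast

lemma act_mult: "is_act G a A \<Longrightarrow> g \<in> carrier G \<Longrightarrow> h \<in> carrier G \<Longrightarrow> x \<in> A \<Longrightarrow> a g (a h x) = a (g \<otimes> h) x"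
  unfolding is_act_def by blast

lemma act_inv: "is_act G a A \<Longrightarrow> g \<in> carrier G \<Longrightarrow> x \<in> A \<Longrightarrow> a (inv g) (a g x) = x"
  by (simp add: act_mult act_one)

lemma act_eq_iff:
  assumes A: "is_act G a A" and g: "g \<in> carrier G" and h: "h \<in> carrier G" and x: "x \<in> A"
  shows "a g x = a h x \<longleftrightarrow> inv h \<otimes> g \<in> stab_of G a x"
proof
  assume e: "a g x = a h x"
  have "a (inv h \<otimes> g) x = a (inv h) (a g x)" using act_mult[OF A _ g x] h by simp
  also have "\<dots> = a (inv h) (a h x)" using e by simp
  also have "\<dots> = x" using act_inv[OF A h x] .
  finally show "inv h \<otimes> g \<in> stab_of G a x" using g h unfolding stab_of_def by simp
next
  assume "inv h \<otimes> g \<in> stab_of G a x"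
  then have e: "a (inv h \<otimes> g) x = x" unfolding stab_of_def by auto
  have hg: "h \<otimes> (inv h \<otimes> g) = g" using g h by (simp add: m_assoc[symmetric])
  have "a g x = a (h \<otimes> (inv h \<otimes> g)) x" by (simp only: hg)
  also have "\<dots> = a h (a (inv h \<otimes> g) x)" using act_mult[OF A h _ x] g h by simp
  also have "\<dots> = a h x" using e by simp
  finally show "a g x = a h x" .
qed

lemma orb_sub: "is_act G a A \<Longrightarrow> x \<in> A \<Longrightarrow> orb_of G a x \<subseteq> A"
  unfolding orb_of_def using act_closed[of a A _ x] by auto

lemma orb_closed: "is_act G a A \<Longrightarrow> x \<in> A \<Longrightarrow> g \<in> carrier G \<Longrightarrow> z \<in> orb_of G a x \<Longrightarrow> a g z \<in> orb_of G a x"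
proof -
  assume A: "is_act G a A" and x: "x \<in> A" and g: "g \<in> carrier G" and z: "z \<in> orb_of G a x"
  then obtain h where h: "h \<in> carrier G" "z = a h x" unfolding orb_of_def by auto
  then have "a g z = a (g \<otimes> h) x" using act_mult[OF A g h(1) x] by simp
  then show ?thesis unfolding orb_of_def using g h by auto
qed

lemma orbit_iso:
  assumes A: "is_act G a A" and B: "is_act G b B" and x: "x \<in> A" and y: "y \<in> B"
    and st: "stab_of G a x = stab_of G b y"
  shows "\<exists>f. bij_betw f (orb_of G a x) (orb_of G b y) \<and>
             (\<forall>g\<in>carrier G. \<forall>z\<in>orb_of G a x. f (a g z) = b g (f z))"
proof -
  have key: "a g x = a h x \<longleftrightarrow> b g y = b h y" if "g \<in> carrier G" "h \<in> carrier G" for g h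
    unfolding act_eq_iff[OF A that x] act_eq_iff[OF B that y] st ..
  define f where "f z = b (SOME g. g \<in> carrier G \<and> a g x = z) y" for z
  have fv: "f (a g x) = b g y" if g: "g \<in> carrier G" for g
  proof -
    have "\<exists>g'. g' \<in> carrier G \<and> a g' x = a g x" using g by blast
    then have "(SOME g'. g' \<in> carrier G \<and> a g' x = a g x) \<in> carrier G \<and>
      a (SOME g'. g' \<in> carrier G \<and> a g' x = a g x) x = a g x" by (rule someI_ex)
    then have "b (SOME g'. g' \<in> carrier G \<and> a g' x = a g x) y = b g y"
      using key g by blast
    then show ?thesis unfolding f_def .
  qed
  have "bij_betw f (orb_of G a x) (orb_of G b y)"
    unfolding bij_betw_def inj_on_def orb_of_def
  proof (intro conjI ballI impI)
    fix z w assume "z \<in> (\<lambda>g. a g x) ` carrier G" "w \<in> (\<lambda>g. a g x) ` carrier G" "f z = f w"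
    then obtain g h where gh: "g \<in> carrier G" "h \<in> carrier G" "z = a g x" "w = a h x" "f z = f w" by blast
    then have "b g y = b h y" using fv by simp
    then show "z = w" using key[OF gh(1,2)] gh by simp
  next
    show "f ` (\<lambda>g. a g x) ` carrier G = (\<lambda>g. b g y) ` carrier G"
      unfolding image_image using fv by (simp cong: image_cong)
  qed
  moreover have "\<forall>g\<in>carrier G. \<forall>z\<in>orb_of G a x. f (a g z) = b g (f z)"
  proof (intro ballI)
    fix g z assume g: "g \<in> carrier G" and z: "z \<in> orb_of G a x"
    then obtain h where h: "h \<in> carrier G" "z = a h x" unfolding orb_of_def by auto
    have "f (a g z) = f (a (g \<otimes> h) x)" using act_mult[OF A g h(1) x] h by simp
    also have "\<dots> = b (g \<otimes> h) y" using fv g h by simp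
    also have "\<dots> = b g (b h y)" using act_mult[OF B g h(1) y] by simp
    also have "\<dots> = b g (f z)" using fv h by simp
    finally show "f (a g z) = b g (f z)" .
  qed
  ultimately show ?thesis by blast
qed


lemma fix_card_orb:
  assumes A: "is_act G a A" and B: "is_act G b B" and x: "x \<in> A" and y: "y \<in> B"
    and f0: "bij_betw f0 (orb_of G a x) (orb_of G b y)"
    and eqv: "\<forall>g\<in>carrier G. \<forall>z\<in>orb_of G a x. f0 (a g z) = b g (f0 z)"
    and K: "K \<subseteq> carrier G"
  shows "card (fix_of a (orb_of G a x) K) = card (fix_of b (orb_of G b y) K)"
proof -
  have inj: "inj_on f0 (orb_of G a x)" using f0 bij_betw_def by blast
  have iff: "(\<forall>g\<in>K. a g z = z) \<longleftrightarrow> (\<forall>g\<in>K. b g (f0 z) = f0 z)" if z: "z \<in> orb_of G a x" for z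
  proof
    assume "\<forall>g\<in>K. a g z = z" then show "\<forall>g\<in>K. b g (f0 z) = f0 z" using eqv K z by (metis subsetD)
  next
    assume h: "\<forall>g\<in>K. b g (f0 z) = f0 z"
    show "\<forall>g\<in>K. a g z = z"
    proof
      fix g assume g: "g \<in> K"
      then have gc: "g \<in> carrier G" using K by blast
      have "f0 (a g z) = f0 z" using eqv gc z h g by simp
      moreover have "a g z \<in> orb_of G a x" using orb_closed[OF A x gc z] .
      ultimately show "a g z = z" using inj z unfolding inj_on_def by blast
    qed
  qed
  have "bij_betw f0 (fix_of a (orb_of G a x) K) (fix_of b (orb_of G b y) K)"
    unfolding bij_betw_def
  proof
    show "inj_on f0 (fix_of a (orb_of G a x) K)" using inj unfolding fix_of_def by (rule inj_on_subset) auto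
    show "f0 ` fix_of a (orb_of G a x) K = fix_of b (orb_of G b y) K"
    proof
      show "f0 ` fix_of a (orb_of G a x) K \<subseteq> fix_of b (orb_of G b y) K"
      proof
        fix w assume "w \<in> f0 ` fix_of a (orb_of G a x) K"
        then obtain z where z: "z \<in> orb_of G a x" "\<forall>g\<in>K. a g z = z" "w = f0 z"
          unfolding fix_of_def by auto
        have "f0 z \<in> orb_of G b y" using f0 z(1) unfolding bij_betw_def by auto
        then show "w \<in> fix_of b (orb_of G b y) K" using iff[OF z(1)] z unfolding fix_of_def by simp
      qed
    next
      show "fix_of b (orb_of G b y) K \<subseteq> f0 ` fix_of a (orb_of G a x) K"
      proof
        fix w assume w: "w \<in> fix_of b (orb_of G b y) K"
        then have "w \<in> f0 ` orb_of G a x" using f0 unfolding bij_betw_def fix_of_def by simp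
        then obtain z where z: "z \<in> orb_of G a x" "w = f0 z" by auto
        have "\<forall>g\<in>K. a g z = z" using iff[OF z(1)] w z(2) unfolding fix_of_def by simp
        then show "w \<in> f0 ` fix_of a (orb_of G a x) K" using z unfolding fix_of_def by auto
      qed
    qed
  qed
  then show ?thesis by (rule bij_betw_same_card)
qed

lemma act_diff_orb:
  assumes A: "is_act G a A" and x: "x \<in> A"
  shows "is_act G a (A - orb_of G a x)"
  unfolding is_act_def
proof (intro conjI ballI)
  fix g z assume g: "g \<in> carrier G" and z: "z \<in> A - orb_of G a x"
  have "a g z \<in> A" using act_closed[OF A g] z by blast
  moreover have "a g z \<notin> orb_of G a x"
  proof
    assume "a g z \<in> orb_of G a x"
    then have "a (inv g) (a g z) \<in> orb_of G a x" using orb_closed[OF A x] g by simp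
    then show False using act_inv[OF A g] z by simp
  qed
  ultimately show "a g z \<in> A - orb_of G a x" by blast
next
  fix z assume "z \<in> A - orb_of G a x" then show "a \<one> z = z" using act_one[OF A] by blast
next
  fix g h z assume "g \<in> carrier G" "h \<in> carrier G" "z \<in> A - orb_of G a x"
  then show "a g (a h z) = a (g \<otimes> h) z" using act_mult[OF A] by blast
qed

lemma burnside:
  assumes fin: "finite (carrier G)"
  shows "is_act G a A \<Longrightarrow> is_act G b B \<Longrightarrow> finite A \<Longrightarrow> finite B \<Longrightarrow>
     (\<forall>x\<in>A. card (fix_of a A (stab_of G a x)) = card (fix_of b B (stab_of G a x))) \<Longrightarrow>
     (\<forall>y\<in>B. card (fix_of a A (stab_of G b y)) = card (fix_of b B (stab_of G b y))) \<Longrightarrow>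
     \<exists>f. bij_betw f A B \<and> (\<forall>g\<in>carrier G. \<forall>x\<in>A. f (a g x) = b g (f x))"
proof (induction "card A" arbitrary: A B rule: less_induct)
  case less
  note A = less.prems(1) and B = less.prems(2) and fA = less.prems(3) and fB = less.prems(4)
    and mA = less.prems(5) and mB = less.prems(6)
  have stabsub: "stab_of G c w \<subseteq> carrier G" for c :: "'a \<Rightarrow> 'z \<Rightarrow> 'z" and w unfolding stab_of_def by auto
  have inown: "w \<in> fix_of c C (stab_of G c w)" if "w \<in> C" for c :: "'a \<Rightarrow> 'z \<Rightarrow> 'z" and w C
    using that unfolding fix_of_def stab_of_def by auto
  have fixfin: "finite (fix_of c C K)" if "finite C" for c :: "'a \<Rightarrow> 'z \<Rightarrow> 'z" and C K
    using that unfolding fix_of_def by auto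
  show ?case
  proof (cases "A = {}")
    case True
    have "B = {}"
    proof (rule ccontr)
      assume "B \<noteq> {}" then obtain y where y: "y \<in> B" by blast
      have "card (fix_of b B (stab_of G b y)) > 0"
        using inown[OF y] fixfin[OF fB] card_gt_0_iff by blast
      moreover have "fix_of a A (stab_of G b y) = {}" using True unfolding fix_of_def by auto
      ultimately show False using mB y by (metis card.empty less_irrefl)
    qed
    then show ?thesis using True by (auto simp: bij_betw_def)
  next
    case False
    define m where "m = Max ((\<lambda>x. card (stab_of G a x)) ` A)"
    have "m \<in> (\<lambda>x. card (stab_of G a x)) ` A" unfolding m_def using False fA by (intro Max_in) auto
    then obtain x where x: "x \<in> A" and xm: "card (stab_of G a x) = m" by auto
    have xmax: "card (stab_of G a x') \<le> card (stab_of G a x)" if "x' \<in> A" for x'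
      unfolding xm m_def using that fA by (intro Max_ge) auto
    define K where "K = stab_of G a x"
    have "card (fix_of a A K) > 0" unfolding K_def using inown[OF x] fixfin[OF fA] card_gt_0_iff by blast
    then have "card (fix_of b B K) > 0" using mA x K_def by simp
    then have "fix_of b B K \<noteq> {}" by (metis card.empty less_irrefl)
    then obtain y where "y \<in> fix_of b B K" by blast
    then have y: "y \<in> B" and yK: "\<forall>g\<in>K. b g y = y" unfolding fix_of_def by auto
    have Ksub: "K \<subseteq> stab_of G b y" using yK stabsub unfolding K_def stab_of_def by auto
    have st: "stab_of G a x = stab_of G b y"
    proof (rule ccontr)
      assume "stab_of G a x \<noteq> stab_of G b y"
      then have ps: "K \<subset> stab_of G b y" using Ksub K_def by auto
      have c1: "card K < card (stab_of G b y)"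
        using ps finite_subset[OF stabsub fin] by (rule psubset_card_mono[rotated])
      have "card (fix_of b B (stab_of G b y)) > 0" using inown[OF y] fixfin[OF fB] card_gt_0_iff by blast
      then have "card (fix_of a A (stab_of G b y)) > 0" using mB y by simp
      then have "fix_of a A (stab_of G b y) \<noteq> {}" by (metis card.empty less_irrefl)
      then obtain x' where "x' \<in> fix_of a A (stab_of G b y)" by blast
      then have x': "x' \<in> A" and "\<forall>g\<in>stab_of G b y. a g x' = x'" unfolding fix_of_def by auto
      then have "stab_of G b y \<subseteq> stab_of G a x'" using stabsub unfolding stab_of_def by auto
      then have "card (stab_of G b y) \<le> card (stab_of G a x')"
        using finite_subset[OF stabsub fin] by (intro card_mono)
      then show False using xmax[OF x'] c1 K_def by simp
    qed
    obtain f0 where f0: "bij_betw f0 (orb_of G a x) (orb_of G b y)"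
      and eqv: "\<forall>g\<in>carrier G. \<forall>z\<in>orb_of G a x. f0 (a g z) = b g (f0 z)"
      using orbit_iso[OF A B x y st] by blast
    define A' where "A' = A - orb_of G a x"
    define B' where "B' = B - orb_of G b y"
    have A': "is_act G a A'" unfolding A'_def by (rule act_diff_orb[OF A x])
    have B': "is_act G b B'" unfolding B'_def by (rule act_diff_orb[OF B y])
    have xo: "x \<in> orb_of G a x" unfolding orb_of_def using act_one[OF A x] by force
    have oA: "orb_of G a x \<subseteq> A" by (rule orb_sub[OF A x])
    have oB: "orb_of G b y \<subseteq> B" by (rule orb_sub[OF B y])
    have "A' \<subset> A" unfolding A'_def using xo oA x by auto
    then have lt: "card A' < card A" using fA by (rule psubset_card_mono[rotated])
    have fixdiff: "card (fix_of c (C - Oo) L) = card (fix_of c C L) - card (fix_of c Oo L)"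
      if "Oo \<subseteq> C" "finite C" for c :: "'a \<Rightarrow> 'z \<Rightarrow> 'z" and C Oo L
    proof -
      have "fix_of c (C - Oo) L = fix_of c C L - fix_of c Oo L" unfolding fix_of_def by auto
      moreover have "fix_of c Oo L \<subseteq> fix_of c C L" using that unfolding fix_of_def by auto
      ultimately show ?thesis using that by (simp add: card_Diff_subset fixfin rev_finite_subset)
    qed
    have meq: "card (fix_of a A' L) = card (fix_of b B' L)"
      if L: "L \<subseteq> carrier G" and e: "card (fix_of a A L) = card (fix_of b B L)" for L
    proof -
      have "card (fix_of a A' L) = card (fix_of a A L) - card (fix_of a (orb_of G a x) L)"
        unfolding A'_def by (rule fixdiff[OF oA fA])
      also have "\<dots> = card (fix_of b B L) - card (fix_of b (orb_of G b y) L)"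
        using e fix_card_orb[OF A B x y f0 eqv L] by simp
      also have "\<dots> = card (fix_of b B' L)"
        unfolding B'_def by (rule fixdiff[OF oB fB, symmetric])
      finally show ?thesis .
    qed
    have "\<exists>f. bij_betw f A' B' \<and> (\<forall>g\<in>carrier G. \<forall>x\<in>A'. f (a g x) = b g (f x))"
    proof (rule less.hyps[OF lt A' B'])
      show "finite A'" "finite B'" using fA fB unfolding A'_def B'_def by auto
      show "\<forall>x\<in>A'. card (fix_of a A' (stab_of G a x)) = card (fix_of b B' (stab_of G a x))"
      proof
        fix z assume "z \<in> A'" then have z: "z \<in> A" unfolding A'_def by simp
        show "card (fix_of a A' (stab_of G a z)) = card (fix_of b B' (stab_of G a z))"
          by (rule meq[OF stabsub]) (use mA z in blast)
      qed
      show "\<forall>y\<in>B'. card (fix_of a A' (stab_of G b y)) = card (fix_of b B' (stab_of G b y))"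
      proof
        fix z assume "z \<in> B'" then have z: "z \<in> B" unfolding B'_def by simp
        show "card (fix_of a A' (stab_of G b z)) = card (fix_of b B' (stab_of G b z))"
          by (rule meq[OF stabsub]) (use mB z in blast)
      qed
    qed
    then obtain f' where f': "bij_betw f' A' B'" and eqv': "\<forall>g\<in>carrier G. \<forall>x\<in>A'. f' (a g x) = b g (f' x)"
      by blast
    define f where "f z = (if z \<in> orb_of G a x then f0 z else f' z)" for z
    have "bij_betw f (orb_of G a x \<union> A') (orb_of G b y \<union> B')"
    proof (rule bij_betw_combine)
      show "bij_betw f (orb_of G a x) (orb_of G b y)" using f0 by (rule bij_betw_cong[THEN iffD1, rotated]) (simp add: f_def)
      show "bij_betw f A' (B')" using f' by (rule bij_betw_cong[THEN iffD1, rotated]) (simp add: f_def A'_def)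
      show "orb_of G b y \<inter> B' = {}" unfolding B'_def by auto
    qed
    moreover have "orb_of G a x \<union> A' = A" "orb_of G b y \<union> B' = B" using oA oB unfolding A'_def B'_def by auto
    moreover have "\<forall>g\<in>carrier G. \<forall>z\<in>A. f (a g z) = b g (f z)"
    proof (intro ballI)
      fix g z assume g: "g \<in> carrier G" and z: "z \<in> A"
      show "f (a g z) = b g (f z)"
      proof (cases "z \<in> orb_of G a x")
        case True
        then show ?thesis using orb_closed[OF A x g True] eqv g unfolding f_def by simp
      next
        case False
        then have zA': "z \<in> A'" using z A'_def by simp
        then have "a g z \<in> A'" using act_closed[OF A' g] by simp
        then show ?thesis using False eqv' g zA' unfolding f_def A'_def by simp
      qed
    qed
    ultimately show ?thesis by metis
  qed
qed

end




definition cls :: "('a,'m) monoid_scheme \<Rightarrow> 'a set \<Rightarrow> ('a \<Rightarrow> 'a) \<Rightarrow> 'a \<Rightarrow> 'a \<Rightarrow> ('a \<times> 'a) set" where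
  "cls G R \<theta> x y = (\<lambda>r. (x \<otimes>\<^bsub>G\<^esub> r, inv\<^bsub>G\<^esub> (\<theta> r) \<otimes>\<^bsub>G\<^esub> y)) ` R"

definition tbE :: "('a,'m) monoid_scheme \<Rightarrow> 'a set \<Rightarrow> ('a \<Rightarrow> 'a) \<Rightarrow> (('a \<times> 'a) \<times> ('a \<times> 'a)) set" where
  "tbE G R \<theta> = (tb_rel G R \<theta> \<union> (tb_rel G R \<theta>)\<inverse>)\<^sup>*"

lemma equiv_tbE: "equiv UNIV (tbE G R \<theta>)"
  unfolding tbE_def
  by (intro equivI refl_onI trans_rtrancl sym_rtrancl sym_Un_converse) auto

locale tbloc = group G for G (structure) +
  fixes R \<theta>
  assumes sub: "subgroup R G" and hm: "\<theta> \<in> hom (G\<lparr>carrier := R\<rparr>) G"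
begin

lemma Rsub: "r \<in> R \<Longrightarrow> r \<in> carrier G"
  using subgroup.subset[OF sub] by blast

lemma gh: "group_hom (G\<lparr>carrier := R\<rparr>) G \<theta>"
  by (intro group_hom.intro group_hom_axioms.intro subgroup.subgroup_is_group[OF sub is_group] is_group hm)

lemma th_closed: "r \<in> R \<Longrightarrow> \<theta> r \<in> carrier G"
  using hm unfolding hom_def by auto

lemma th_mult: "r \<in> R \<Longrightarrow> s \<in> R \<Longrightarrow> \<theta> (r \<otimes> s) = \<theta> r \<otimes> \<theta> s"
  using hm unfolding hom_def by auto

lemma th_one: "\<theta> \<one> = \<one>"
  using group_hom.hom_one[OF gh] by simp

lemma th_inv: "r \<in> R \<Longrightarrow> \<theta> (inv r) = inv (\<theta> r)"
  using group_hom.hom_inv[OF gh, of r] m_inv_consistent[OF sub, of r] by simp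

lemma R_mult: "r \<in> R \<Longrightarrow> s \<in> R \<Longrightarrow> r \<otimes> s \<in> R"
  using subgroup.m_closed[OF sub] .

lemma R_inv: "r \<in> R \<Longrightarrow> inv r \<in> R"
  using subgroup.m_inv_closed[OF sub] .

lemma R_one: "\<one> \<in> R"
  using subgroup.one_closed[OF sub] .

lemma cls_mem: "(a, b) \<in> cls G R \<theta> x y \<longleftrightarrow> (\<exists>r\<in>R. a = x \<otimes> r \<and> b = inv (\<theta> r) \<otimes> y)"
  unfolding cls_def by auto

lemma cls_self: "x \<in> carrier G \<Longrightarrow> y \<in> carrier G \<Longrightarrow> (x, y) \<in> cls G R \<theta> x y"
  unfolding cls_mem using R_one th_one by (intro bexI[of _ \<one>]) auto

lemma cls_sub: "x \<in> carrier G \<Longrightarrow> y \<in> carrier G \<Longrightarrow> cls G R \<theta> x y \<subseteq> carrier G \<times> carrier G"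
  unfolding cls_def using Rsub th_closed by auto

lemma cls_card: "x \<in> carrier G \<Longrightarrow> card (cls G R \<theta> x y) = card R"
  unfolding cls_def
proof (rule card_image)
  assume x: "x \<in> carrier G"
  show "inj_on (\<lambda>r. (x \<otimes> r, inv (\<theta> r) \<otimes> y)) R"
  proof
    fix r s assume "r \<in> R" "s \<in> R" "(x \<otimes> r, inv (\<theta> r) \<otimes> y) = (x \<otimes> s, inv (\<theta> s) \<otimes> y)"
    then show "r = s" using x Rsub l_cancel by blast
  qed
qed

lemma tbE_cls:
  assumes x: "x \<in> carrier G" and y: "y \<in> carrier G"
  shows "tbE G R \<theta> `` {(x, y)} = cls G R \<theta> x y"
proof
  show "cls G R \<theta> x y \<subseteq> tbE G R \<theta> `` {(x, y)}"
  proof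
    fix p assume "p \<in> cls G R \<theta> x y"
    then obtain r where r: "r \<in> R" and p: "p = (x \<otimes> r, inv (\<theta> r) \<otimes> y)" unfolding cls_def by auto
    have iy: "inv (\<theta> r) \<otimes> y \<in> carrier G" using th_closed r y by simp
    have e: "\<theta> r \<otimes> (inv (\<theta> r) \<otimes> y) = y" using th_closed r y by (simp add: m_assoc[symmetric])
    have "((x \<otimes> r, inv (\<theta> r) \<otimes> y), (x, \<theta> r \<otimes> (inv (\<theta> r) \<otimes> y))) \<in> tb_rel G R \<theta>"
      unfolding tb_rel_def using x iy r by blast
    then have "((x, y), p) \<in> (tb_rel G R \<theta>)\<inverse>" using e p by simp
    then show "p \<in> tbE G R \<theta> `` {(x, y)}" unfolding tbE_def by blast
  qed
next
  show "tbE G R \<theta> `` {(x, y)} \<subseteq> cls G R \<theta> x y"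
  proof
    fix p assume "p \<in> tbE G R \<theta> `` {(x, y)}"
    then have "((x, y), p) \<in> (tb_rel G R \<theta> \<union> (tb_rel G R \<theta>)\<inverse>)\<^sup>*" unfolding tbE_def by simp
    then show "p \<in> cls G R \<theta> x y"
    proof (induction rule: rtrancl_induct)
      case base
      then show ?case using cls_self x y by simp
    next
      case (step b c)
      from step.IH obtain r where r: "r \<in> R" and b: "b = (x \<otimes> r, inv (\<theta> r) \<otimes> y)"
        unfolding cls_def by auto
      have rG: "r \<in> carrier G" using Rsub r by simp
      have tr: "\<theta> r \<in> carrier G" using th_closed r by simp
      from step.hyps(2) show ?case
      proof
        assume "(b, c) \<in> tb_rel G R \<theta>"
        then obtain x' y' u where xyu: "x' \<in> carrier G" "y' \<in> carrier G" "u \<in> R"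
          and bc: "b = (x' \<otimes> u, y')" "c = (x', \<theta> u \<otimes> y')" unfolding tb_rel_def by blast
        have uG: "u \<in> carrier G" using Rsub xyu(3) by simp
        have tu: "\<theta> u \<in> carrier G" using th_closed xyu(3) by simp
        have e1: "x' \<otimes> u = x \<otimes> r" and e2: "y' = inv (\<theta> r) \<otimes> y" using b bc by auto
        have "x' = x \<otimes> r \<otimes> inv u"
          using e1 xyu uG x rG by (metis inv_solve_right m_closed)
        then have c1: "x' = x \<otimes> (r \<otimes> inv u)" using x rG uG by (simp add: m_assoc)
        have "inv (\<theta> (r \<otimes> inv u)) = \<theta> u \<otimes> inv (\<theta> r)"
          using th_mult[OF r R_inv[OF xyu(3)]] th_inv[OF xyu(3)] tr tu
          by (simp add: inv_mult_group)
        then have c2: "\<theta> u \<otimes> y' = inv (\<theta> (r \<otimes> inv u)) \<otimes> y"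
          using e2 tr tu y by (simp add: m_assoc)
        have "r \<otimes> inv u \<in> R" using R_mult[OF r R_inv[OF xyu(3)]] .
        then show ?case unfolding bc(2) cls_mem using c1 c2 by blast
      next
        assume "(b, c) \<in> (tb_rel G R \<theta>)\<inverse>"
        then have "(c, b) \<in> tb_rel G R \<theta>" by simp
        then obtain x' y' u where xyu: "x' \<in> carrier G" "y' \<in> carrier G" "u \<in> R"
          and bc: "c = (x' \<otimes> u, y')" "b = (x', \<theta> u \<otimes> y')" unfolding tb_rel_def by blast
        have uG: "u \<in> carrier G" using Rsub xyu(3) by simp
        have tu: "\<theta> u \<in> carrier G" using th_closed xyu(3) by simp
        have e1: "x' = x \<otimes> r" and e2: "\<theta> u \<otimes> y' = inv (\<theta> r) \<otimes> y" using b bc by auto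
        have "y' = inv (\<theta> u) \<otimes> (inv (\<theta> r) \<otimes> y)"
          using e2 tu tr y xyu(2) by (metis inv_closed inv_solve_left m_closed)
        also have "\<dots> = inv (\<theta> (r \<otimes> u)) \<otimes> y"
          using th_mult[OF r xyu(3)] tr tu y by (simp add: inv_mult_group m_assoc)
        finally have c2: "y' = inv (\<theta> (r \<otimes> u)) \<otimes> y" .
        have c1: "x' \<otimes> u = x \<otimes> (r \<otimes> u)" using e1 x rG uG by (simp add: m_assoc)
        show ?case unfolding bc(1) cls_mem using c1 c2 R_mult[OF r xyu(3)] by blast
      qed
    qed
  qed
qed

lemma tb_carrier_eq: "tb_carrier G R \<theta> = (\<lambda>(x, y). cls G R \<theta> x y) ` (carrier G \<times> carrier G)"
proof -
  have "tb_carrier G R \<theta> = (\<lambda>p. tbE G R \<theta> `` {p}) ` (carrier G \<times> carrier G)"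
    unfolding tb_carrier_def tbE_def quotient_def by auto
  also have "\<dots> = (\<lambda>(x, y). cls G R \<theta> x y) ` (carrier G \<times> carrier G)"
  proof (rule image_cong)
    fix p assume "p \<in> carrier G \<times> carrier G"
    then obtain x y where "p = (x, y)" "x \<in> carrier G" "y \<in> carrier G" by blast
    then show "tbE G R \<theta> `` {p} = (\<lambda>(x, y). cls G R \<theta> x y) p" using tbE_cls by simp
  qed simp
  finally show ?thesis .
qed

lemma cls_eq:
  assumes x: "x \<in> carrier G" and y: "y \<in> carrier G" and x': "x' \<in> carrier G" and y': "y' \<in> carrier G"
    and m: "(x', y') \<in> cls G R \<theta> x y"
  shows "cls G R \<theta> x' y' = cls G R \<theta> x y"
proof -
  have "((x, y), (x', y')) \<in> tbE G R \<theta>" using m tbE_cls[OF x y] by blast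
  then have "tbE G R \<theta> `` {(x, y)} = tbE G R \<theta> `` {(x', y')}"
    using equiv_class_eq[OF equiv_tbE] by blast
  then show ?thesis using tbE_cls x y x' y' by simp
qed

lemma cls_eq_iff:
  assumes x: "x \<in> carrier G" and y: "y \<in> carrier G" and x': "x' \<in> carrier G" and y': "y' \<in> carrier G"
  shows "cls G R \<theta> x' y' = cls G R \<theta> x y \<longleftrightarrow> (x', y') \<in> cls G R \<theta> x y"
  using cls_eq[OF assms] cls_self[OF x' y'] by blast

lemma cls_disj:
  assumes x: "x \<in> carrier G" and y: "y \<in> carrier G" and x': "x' \<in> carrier G" and y': "y' \<in> carrier G"
    and ne: "cls G R \<theta> x' y' \<inter> cls G R \<theta> x y \<noteq> {}"
  shows "cls G R \<theta> x' y' = cls G R \<theta> x y"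
proof -
  obtain p where p: "p \<in> cls G R \<theta> x' y'" "p \<in> cls G R \<theta> x y" using ne by blast
  obtain a b where ab: "p = (a, b)" by fastforce
  have "a \<in> carrier G" "b \<in> carrier G" using cls_sub[OF x y] p(2) ab by auto
  then show ?thesis using cls_eq[OF x' y' _ _ p(1)[unfolded ab]] cls_eq[OF x y _ _ p(2)[unfolded ab]] by simp
qed

lemma tb_left_cls:
  assumes s: "s \<in> carrier G" and x: "x \<in> carrier G"
  shows "tb_left G s (cls G R \<theta> x y) = cls G R \<theta> (s \<otimes> x) y"
  unfolding tb_left_def cls_def image_image using s x Rsub by (auto simp: m_assoc intro!: image_cong)

lemma tb_right_cls:
  assumes t: "t \<in> carrier G" and y: "y \<in> carrier G"
  shows "tb_right G (cls G R \<theta> x y) t = cls G R \<theta> x (y \<otimes> t)"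
  unfolding tb_right_def cls_def image_image using t y th_closed by (auto simp: m_assoc intro!: image_cong)

lemma cls_fix_iff:
  assumes x: "x \<in> carrier G" and y: "y \<in> carrier G" and u: "u \<in> carrier G" and t: "t \<in> carrier G"
  shows "cls G R \<theta> (u \<otimes> x) y = cls G R \<theta> x (y \<otimes> t) \<longleftrightarrow>
         inv x \<otimes> u \<otimes> x \<in> R \<and> \<theta> (inv x \<otimes> u \<otimes> x) = y \<otimes> t \<otimes> inv y"
proof -
  have "cls G R \<theta> (u \<otimes> x) y = cls G R \<theta> x (y \<otimes> t) \<longleftrightarrow> (u \<otimes> x, y) \<in> cls G R \<theta> x (y \<otimes> t)"
    using cls_eq_iff assms by simp
  also have "\<dots> \<longleftrightarrow> (\<exists>r\<in>R. u \<otimes> x = x \<otimes> r \<and> y = inv (\<theta> r) \<otimes> (y \<otimes> t))" by (rule cls_mem)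
  also have "\<dots> \<longleftrightarrow> inv x \<otimes> u \<otimes> x \<in> R \<and> \<theta> (inv x \<otimes> u \<otimes> x) = y \<otimes> t \<otimes> inv y"
  proof
    assume "\<exists>r\<in>R. u \<otimes> x = x \<otimes> r \<and> y = inv (\<theta> r) \<otimes> (y \<otimes> t)"
    then obtain r where r: "r \<in> R" "u \<otimes> x = x \<otimes> r" "y = inv (\<theta> r) \<otimes> (y \<otimes> t)" by blast
    have rG: "r \<in> carrier G" using Rsub r(1) by simp
    have tr: "\<theta> r \<in> carrier G" using th_closed r(1) by simp
    have "inv x \<otimes> u \<otimes> x = r" using r(2) x u rG by (simp add: m_assoc m_assoc[symmetric])
    moreover have "\<theta> r = y \<otimes> t \<otimes> inv y"
    proof -
      have "\<theta> r \<otimes> y = y \<otimes> t" using r(3) tr y t by (metis inv_solve_left m_closed)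
      then show ?thesis using tr y t by (metis inv_solve_right m_closed)
    qed
    ultimately show "inv x \<otimes> u \<otimes> x \<in> R \<and> \<theta> (inv x \<otimes> u \<otimes> x) = y \<otimes> t \<otimes> inv y" using r(1) by simp
  next
    assume h: "inv x \<otimes> u \<otimes> x \<in> R \<and> \<theta> (inv x \<otimes> u \<otimes> x) = y \<otimes> t \<otimes> inv y"
    define r where "r = inv x \<otimes> u \<otimes> x"
    have r: "r \<in> R" using h r_def by simp
    have rG: "r \<in> carrier G" using Rsub r by simp
    have "u \<otimes> x = x \<otimes> r" unfolding r_def using x u by (simp add: m_assoc[symmetric])
    moreover have "y = inv (\<theta> r) \<otimes> (y \<otimes> t)"
    proof -
      have tr: "\<theta> r = y \<otimes> t \<otimes> inv y" using h r_def by simp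
      then have "\<theta> r \<otimes> y = y \<otimes> t" using y t by (simp add: m_assoc)
      then show ?thesis using th_closed[OF r] y t by (metis inv_solve_left m_closed)
    qed
    ultimately show "\<exists>r\<in>R. u \<otimes> x = x \<otimes> r \<and> y = inv (\<theta> r) \<otimes> (y \<otimes> t)" using r by blast
  qed
  finally show ?thesis .
qed

end




context group
begin

lemma mi1 [simp]: "x \<in> carrier G \<Longrightarrow> u \<in> carrier G \<Longrightarrow> x \<otimes> (inv x \<otimes> u) = u"
  by (simp add: m_assoc[symmetric])

lemma mi2 [simp]: "x \<in> carrier G \<Longrightarrow> u \<in> carrier G \<Longrightarrow> inv x \<otimes> (x \<otimes> u) = u"
  by (simp add: m_assoc[symmetric])

context
  fixes F :: "'a set \<Rightarrow> 'a set \<Rightarrow> ('a \<Rightarrow> 'a) set"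
  assumes fs: "fusion_system G F"
begin

lemma F_sub: "\<phi> \<in> F P Q \<Longrightarrow> subgroup P G \<and> subgroup Q G"
  using fs unfolding fusion_system_def by blast

lemma F_props: "\<phi> \<in> F P Q \<Longrightarrow> \<phi> \<in> extensional P \<and> \<phi> \<in> hom (G\<lparr>carrier := P\<rparr>) G \<and> \<phi> ` P \<subseteq> Q \<and> inj_on \<phi> P"
  using fs unfolding fusion_system_def by blast

lemma F_conj: "subgroup P G \<Longrightarrow> subgroup Q G \<Longrightarrow> s \<in> carrier G \<Longrightarrow>
   (\<lambda>u. s \<otimes> u \<otimes> inv s) ` P \<subseteq> Q \<Longrightarrow> restrict (\<lambda>u. s \<otimes> u \<otimes> inv s) P \<in> F P Q"
  using fs unfolding fusion_system_def by blast

lemma F_iso: "\<phi> \<in> F P Q \<Longrightarrow> \<phi> \<in> F P (\<phi> ` P) \<and> restrict (inv_into P \<phi>) (\<phi> ` P) \<in> F (\<phi> ` P) P"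
  using fs unfolding fusion_system_def by blast

lemma F_comp: "\<phi> \<in> F P Q \<Longrightarrow> \<psi> \<in> F Q R \<Longrightarrow> restrict (\<psi> \<circ> \<phi>) P \<in> F P R"
  using fs unfolding fusion_system_def by blast

lemma F_restr:
  assumes th: "\<theta> \<in> F R (carrier G)" and P: "subgroup P G" and PR: "P \<subseteq> R"
  shows "restrict \<theta> P \<in> F P (carrier G)"
proof -
  have R: "subgroup R G" using F_sub[OF th] by blast
  have "\<forall>u\<in>P. \<one> \<otimes> u \<otimes> inv \<one> = u" using subgroup.subset[OF P] by auto
  then have "(\<lambda>u. \<one> \<otimes> u \<otimes> inv \<one>) ` P \<subseteq> R" using PR by auto
  then have "restrict (\<lambda>u. \<one> \<otimes> u \<otimes> inv \<one>) P \<in> F P R" by (rule F_conj[OF P R one_closed])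
  then have "restrict (\<theta> \<circ> restrict (\<lambda>u. \<one> \<otimes> u \<otimes> inv \<one>) P) P \<in> F P (carrier G)"
    using F_comp th by blast
  moreover have "restrict (\<theta> \<circ> restrict (\<lambda>u. \<one> \<otimes> u \<otimes> inv \<one>) P) P = restrict \<theta> P"
  proof (rule restrict_ext)
    fix u assume "u \<in> P"
    then have "u \<in> carrier G" using subgroup.subset[OF P] by blast
    then show "(\<theta> \<circ> restrict (\<lambda>u. \<one> \<otimes> u \<otimes> inv \<one>) P) u = \<theta> u" using \<open>u \<in> P\<close> by simp
  qed
  ultimately show ?thesis by simp
qed

lemma F_ext: "\<theta> \<in> F R Q \<Longrightarrow> restrict \<theta> R = \<theta>"
  using F_props[of \<theta> R Q] by (simp add: extensional_restrict)

lemma conj_subgroup: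
  assumes P: "subgroup P G" and x: "x \<in> carrier G"
  shows "subgroup ((\<lambda>u. inv x \<otimes> u \<otimes> x) ` P) G"
proof -
  have e: "(\<lambda>u. inv x \<otimes> u \<otimes> inv (inv x)) = (\<lambda>u. inv x \<otimes> u \<otimes> x)" using x by simp
  have "restrict (\<lambda>u. inv x \<otimes> u \<otimes> inv (inv x)) P \<in> F P (carrier G)"
    by (rule F_conj[OF P subgroup_self]) (use x subgroup.subset[OF P] in auto)
  then have "restrict (\<lambda>u. inv x \<otimes> u \<otimes> inv (inv x)) P \<in>
     F P (restrict (\<lambda>u. inv x \<otimes> u \<otimes> inv (inv x)) P ` P)" using F_iso by blast
  then have "subgroup (restrict (\<lambda>u. inv x \<otimes> u \<otimes> inv (inv x)) P ` P) G" using F_sub by blast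
  moreover have "restrict (\<lambda>u. inv x \<otimes> u \<otimes> inv (inv x)) P ` P = (\<lambda>u. inv x \<otimes> u \<otimes> x) ` P"
    using e by (auto simp: restrict_def)
  ultimately show ?thesis by simp
qed

lemma F_conj2:
  assumes chi: "\<chi> \<in> F P (carrier G)" and x: "x \<in> carrier G" and y: "y \<in> carrier G"
  shows "restrict (\<lambda>v. y \<otimes> \<chi> (x \<otimes> v \<otimes> inv x) \<otimes> inv y) ((\<lambda>u. inv x \<otimes> u \<otimes> x) ` P)
           \<in> F ((\<lambda>u. inv x \<otimes> u \<otimes> x) ` P) (carrier G)"
proof -
  define P' where "P' = (\<lambda>u. inv x \<otimes> u \<otimes> x) ` P"
  have P: "subgroup P G" using F_sub[OF chi] by blast
  have PG: "P \<subseteq> carrier G" using subgroup.subset[OF P] .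
  have P': "subgroup P' G" unfolding P'_def by (rule conj_subgroup[OF P x])
  have bk: "x \<otimes> (inv x \<otimes> u \<otimes> x) \<otimes> inv x = u" if "u \<in> carrier G" for u
    using that x by (simp add: m_assoc)
  have "(\<lambda>v. x \<otimes> v \<otimes> inv x) ` P' \<subseteq> P" unfolding P'_def using bk PG by auto
  then have c1: "restrict (\<lambda>v. x \<otimes> v \<otimes> inv x) P' \<in> F P' P" using F_conj[OF P' P x] by simp
  have c2: "restrict (\<chi> \<circ> restrict (\<lambda>v. x \<otimes> v \<otimes> inv x) P') P' \<in> F P' (carrier G)"
    using F_comp[OF c1 chi] .
  have "(\<lambda>w. y \<otimes> w \<otimes> inv y) ` carrier G \<subseteq> carrier G" using y by auto
  then have c3: "restrict (\<lambda>w. y \<otimes> w \<otimes> inv y) (carrier G) \<in> F (carrier G) (carrier G)"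
    using F_conj[OF subgroup_self subgroup_self y] by simp
  have c4: "restrict (restrict (\<lambda>w. y \<otimes> w \<otimes> inv y) (carrier G) \<circ> restrict (\<chi> \<circ> restrict (\<lambda>v. x \<otimes> v \<otimes> inv x) P') P') P'
      \<in> F P' (carrier G)" using F_comp[OF c2 c3] .
  have "\<chi> ` P \<subseteq> carrier G" using F_props[OF chi] by blast
  have inP: "x \<otimes> v \<otimes> inv x \<in> P" if "v \<in> P'" for v
    using that bk PG unfolding P'_def by auto
  have "restrict (restrict (\<lambda>w. y \<otimes> w \<otimes> inv y) (carrier G) \<circ> restrict (\<chi> \<circ> restrict (\<lambda>v. x \<otimes> v \<otimes> inv x) P') P') P'
       = restrict (\<lambda>v. y \<otimes> \<chi> (x \<otimes> v \<otimes> inv x) \<otimes> inv y) P'"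
  proof (rule restrict_ext)
    fix v assume v: "v \<in> P'"
    have "\<chi> (x \<otimes> v \<otimes> inv x) \<in> carrier G" using inP[OF v] \<open>\<chi> ` P \<subseteq> carrier G\<close> by blast
    then show "(restrict (\<lambda>w. y \<otimes> w \<otimes> inv y) (carrier G) \<circ> restrict (\<chi> \<circ> restrict (\<lambda>v. x \<otimes> v \<otimes> inv x) P') P') v
        = y \<otimes> \<chi> (x \<otimes> v \<otimes> inv x) \<otimes> inv y" using v by simp
  qed
  then show ?thesis using c4 unfolding P'_def by simp
qed

lemma F_conj2_iff:
  assumes P: "subgroup P G" and cP: "\<chi> ` P \<subseteq> carrier G" and x: "x \<in> carrier G" and y: "y \<in> carrier G"
  shows "restrict (\<lambda>v. y \<otimes> \<chi> (x \<otimes> v \<otimes> inv x) \<otimes> inv y) ((\<lambda>u. inv x \<otimes> u \<otimes> x) ` P)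
           \<in> F ((\<lambda>u. inv x \<otimes> u \<otimes> x) ` P) (carrier G) \<longleftrightarrow> restrict \<chi> P \<in> F P (carrier G)"
proof
  assume "restrict \<chi> P \<in> F P (carrier G)"
  from F_conj2[OF this x y] show "restrict (\<lambda>v. y \<otimes> \<chi> (x \<otimes> v \<otimes> inv x) \<otimes> inv y) ((\<lambda>u. inv x \<otimes> u \<otimes> x) ` P)
           \<in> F ((\<lambda>u. inv x \<otimes> u \<otimes> x) ` P) (carrier G)"
  proof -
    assume h: "restrict (\<lambda>v. y \<otimes> restrict \<chi> P (x \<otimes> v \<otimes> inv x) \<otimes> inv y) ((\<lambda>u. inv x \<otimes> u \<otimes> x) ` P)
               \<in> F ((\<lambda>u. inv x \<otimes> u \<otimes> x) ` P) (carrier G)"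
    have "restrict (\<lambda>v. y \<otimes> restrict \<chi> P (x \<otimes> v \<otimes> inv x) \<otimes> inv y) ((\<lambda>u. inv x \<otimes> u \<otimes> x) ` P)
        = restrict (\<lambda>v. y \<otimes> \<chi> (x \<otimes> v \<otimes> inv x) \<otimes> inv y) ((\<lambda>u. inv x \<otimes> u \<otimes> x) ` P)"
    proof (rule restrict_ext)
      fix v assume "v \<in> (\<lambda>u. inv x \<otimes> u \<otimes> x) ` P"
      then obtain u where u: "u \<in> P" "v = inv x \<otimes> u \<otimes> x" by blast
      have uG: "u \<in> carrier G" using u(1) subgroup.subset[OF P] by blast
      have "x \<otimes> v \<otimes> inv x = u" using u(2) uG x by (simp add: m_assoc)
      then show "y \<otimes> restrict \<chi> P (x \<otimes> v \<otimes> inv x) \<otimes> inv y = y \<otimes> \<chi> (x \<otimes> v \<otimes> inv x) \<otimes> inv y"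
        using u by simp
    qed
    then show ?thesis using h by simp
  qed
next
  define P' where "P' = (\<lambda>u. inv x \<otimes> u \<otimes> x) ` P"
  define \<psi> where "\<psi> = restrict (\<lambda>v. y \<otimes> \<chi> (x \<otimes> v \<otimes> inv x) \<otimes> inv y) P'"
  assume "restrict (\<lambda>v. y \<otimes> \<chi> (x \<otimes> v \<otimes> inv x) \<otimes> inv y) ((\<lambda>u. inv x \<otimes> u \<otimes> x) ` P)
           \<in> F ((\<lambda>u. inv x \<otimes> u \<otimes> x) ` P) (carrier G)"
  then have ps: "\<psi> \<in> F P' (carrier G)" unfolding \<psi>_def P'_def .
  have ix: "inv x \<in> carrier G" and iy: "inv y \<in> carrier G" using x y by auto
  from F_conj2[OF ps ix iy]
  have h: "restrict (\<lambda>v. inv y \<otimes> \<psi> (inv x \<otimes> v \<otimes> inv (inv x)) \<otimes> inv (inv y)) ((\<lambda>u. inv (inv x) \<otimes> u \<otimes> inv x) ` P')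
     \<in> F ((\<lambda>u. inv (inv x) \<otimes> u \<otimes> inv x) ` P') (carrier G)" .
  have PG: "P \<subseteq> carrier G" using subgroup.subset[OF P] .
  have bk: "x \<otimes> (inv x \<otimes> u \<otimes> x) \<otimes> inv x = u" if "u \<in> carrier G" for u
    using that x by (simp add: m_assoc)
  have imgP: "(\<lambda>u. inv (inv x) \<otimes> u \<otimes> inv x) ` P' = P"
  proof -
    have "(\<lambda>u. inv (inv x) \<otimes> u \<otimes> inv x) ` P' = (\<lambda>u. x \<otimes> (inv x \<otimes> u \<otimes> x) \<otimes> inv x) ` P"
      unfolding P'_def image_image using x by simp
    also have "\<dots> = (\<lambda>u. u) ` P" by (rule image_cong) (use bk PG in auto)
    also have "\<dots> = P" by simp
    finally show ?thesis .
  qed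
  have "restrict (\<lambda>v. inv y \<otimes> \<psi> (inv x \<otimes> v \<otimes> inv (inv x)) \<otimes> inv (inv y)) P = restrict \<chi> P"
  proof (rule restrict_ext)
    fix v assume v: "v \<in> P"
    have vG: "v \<in> carrier G" using v PG by blast
    have m: "inv x \<otimes> v \<otimes> x \<in> P'" unfolding P'_def using v by blast
    have cv: "\<chi> v \<in> carrier G" using cP v by blast
    have "\<psi> (inv x \<otimes> v \<otimes> inv (inv x)) = y \<otimes> \<chi> v \<otimes> inv y"
      unfolding \<psi>_def using m bk[OF vG] x by simp
    then show "inv y \<otimes> \<psi> (inv x \<otimes> v \<otimes> inv (inv x)) \<otimes> inv (inv y) = \<chi> v"
      using y cv by (simp add: m_assoc)
  qed
  then show "restrict \<chi> P \<in> F P (carrier G)" using h imgP by simp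
qed

lemma conj_card:
  assumes P: "P \<subseteq> carrier G" and x: "x \<in> carrier G"
  shows "card ((\<lambda>u. inv x \<otimes> u \<otimes> x) ` P) = card P"
proof (rule card_image)
  show "inj_on (\<lambda>u. inv x \<otimes> u \<otimes> x) P"
  proof
    fix u v assume "u \<in> P" "v \<in> P" "inv x \<otimes> u \<otimes> x = inv x \<otimes> v \<otimes> x"
    then show "u = v" using P x by (meson inv_closed l_cancel m_closed r_cancel subsetD)
  qed
qed

lemma F_twist_iff:
  assumes ph: "\<phi> \<in> F Q (carrier G)" and P: "subgroup P G" and PQ: "P \<subseteq> Q"
  shows "restrict \<chi> P \<in> F P (carrier G) \<longleftrightarrow> restrict (\<chi> \<circ> inv_into P \<phi>) (\<phi> ` P) \<in> F (\<phi> ` P) (carrier G)"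
proof -
  define \<phi>P where "\<phi>P = restrict \<phi> P"
  have a: "\<phi>P \<in> F P (carrier G)" unfolding \<phi>P_def by (rule F_restr[OF ph P PQ])
  have img: "\<phi>P ` P = \<phi> ` P" unfolding \<phi>P_def by simp
  have injQ: "inj_on \<phi> Q" using F_props[OF ph] by blast
  then have inj: "inj_on \<phi> P" using PQ inj_on_subset by blast
  have ii: "inv_into P \<phi>P = inv_into P \<phi>"
    unfolding inv_into_def \<phi>P_def by (rule ext, rule arg_cong[where f = Eps]) auto
  have b1: "\<phi>P \<in> F P (\<phi> ` P)" using F_iso[OF a] img by simp
  have b2: "restrict (inv_into P \<phi>) (\<phi> ` P) \<in> F (\<phi> ` P) P"
    using F_iso[OF a] img ii by simp
  show ?thesis
  proof
    assume c: "restrict \<chi> P \<in> F P (carrier G)"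
    have "restrict (restrict \<chi> P \<circ> restrict (inv_into P \<phi>) (\<phi> ` P)) (\<phi> ` P) \<in> F (\<phi> ` P) (carrier G)"
      using F_comp[OF b2 c] .
    moreover have "restrict (restrict \<chi> P \<circ> restrict (inv_into P \<phi>) (\<phi> ` P)) (\<phi> ` P) =
        restrict (\<chi> \<circ> inv_into P \<phi>) (\<phi> ` P)"
      by (rule restrict_ext) (simp add: inv_into_into)
    ultimately show "restrict (\<chi> \<circ> inv_into P \<phi>) (\<phi> ` P) \<in> F (\<phi> ` P) (carrier G)" by simp
  next
    assume c: "restrict (\<chi> \<circ> inv_into P \<phi>) (\<phi> ` P) \<in> F (\<phi> ` P) (carrier G)"
    have "restrict (restrict (\<chi> \<circ> inv_into P \<phi>) (\<phi> ` P) \<circ> \<phi>P) P \<in> F P (carrier G)"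
      using F_comp[OF b1 c] .
    moreover have "restrict (restrict (\<chi> \<circ> inv_into P \<phi>) (\<phi> ` P) \<circ> \<phi>P) P = restrict \<chi> P"
      by (rule restrict_ext) (simp add: \<phi>P_def inv_into_f_f[OF inj])
    ultimately show "restrict \<chi> P \<in> F P (carrier G)" by simp
  qed
qed

lemma twist_subgroup:
  assumes ph: "\<phi> \<in> F Q (carrier G)" and P: "subgroup P G" and PQ: "P \<subseteq> Q"
  shows "subgroup (\<phi> ` P) G" and "card (\<phi> ` P) = card P"
proof -
  have a: "restrict \<phi> P \<in> F P (carrier G)" by (rule F_restr[OF ph P PQ])
  have "restrict \<phi> P \<in> F P (restrict \<phi> P ` P)" using F_iso[OF a] by blast
  then show "subgroup (\<phi> ` P) G" using F_sub by fastforce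
  have "inj_on \<phi> Q" using F_props[OF ph] by blast
  then show "card (\<phi> ` P) = card P" using PQ by (meson card_image inj_on_subset)
qed

end
end




definition VV :: "('a,'m) monoid_scheme \<Rightarrow> ('a set \<Rightarrow> 'a set \<Rightarrow> ('a \<Rightarrow> 'a) set) \<Rightarrow> ('a set \<times> ('a \<Rightarrow> 'a)) set" where
  "VV G F = {q. subgroup (fst q) G \<and> snd q \<in> F (fst q) (carrier G)}"

definition sext :: "('a,'m) monoid_scheme \<Rightarrow> ('a set \<Rightarrow> 'a set \<Rightarrow> ('a \<Rightarrow> 'a) set) \<Rightarrow> 'a set \<Rightarrow> ('a \<Rightarrow> 'a) \<Rightarrow> ('a set \<times> ('a \<Rightarrow> 'a)) set" where
  "sext G F P \<chi> = {q \<in> VV G F. P \<subset> fst q \<and> restrict (snd q) P = \<chi>}"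

primrec kf :: "('a,'m) monoid_scheme \<Rightarrow> ('a set \<Rightarrow> 'a set \<Rightarrow> ('a \<Rightarrow> 'a) set) \<Rightarrow> nat \<Rightarrow> 'a set \<Rightarrow> ('a \<Rightarrow> 'a) \<Rightarrow> nat" where
  "kf G F 0 R \<theta> = 0"
| "kf G F (Suc n) R \<theta> = (if (R, \<theta>) \<in> VV G F then
     (1 + (\<Sum>p\<in>{p \<in> VV G F. card (fst p) = card R}. \<Sum>q\<in>sext G F (fst p) (snd p). kf G F n (fst q) (snd q)))
     - (\<Sum>q\<in>sext G F R \<theta>. kf G F n (fst q) (snd q)) else 0)"

definition cf :: "('a,'m) monoid_scheme \<Rightarrow> ('a set \<Rightarrow> 'a set \<Rightarrow> ('a \<Rightarrow> 'a) set) \<Rightarrow> nat \<Rightarrow> nat \<Rightarrow> nat" where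
  "cf G F n m = 1 + (\<Sum>p\<in>{p \<in> VV G F. card (fst p) = m}. \<Sum>q\<in>sext G F (fst p) (snd p). kf G F n (fst q) (snd q))"

lemma kf_Suc: "kf G F (Suc n) R \<theta> = (if (R, \<theta>) \<in> VV G F then cf G F n (card R) - (\<Sum>q\<in>sext G F R \<theta>. kf G F n (fst q) (snd q)) else 0)"
  unfolding cf_def by simp

definition kk where "kk G F R \<theta> = kf G F (Suc (card (carrier G))) R \<theta>"
definition cc where "cc G F m = cf G F (card (carrier G)) m"

context group
begin

context
  fixes F :: "'a set \<Rightarrow> 'a set \<Rightarrow> ('a \<Rightarrow> 'a) set"
  assumes fs: "fusion_system G F" and fin: "finite (carrier G)"
begin

lemma VV_finite: "finite (VV G F)"
proof (rule finite_subset)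
  show "VV G F \<subseteq> Sigma (Pow (carrier G)) (\<lambda>R. R \<rightarrow>\<^sub>E carrier G)"
  proof
    fix q assume q: "q \<in> VV G F"
    obtain R \<theta> where qq: "q = (R, \<theta>)" by fastforce
    have s: "subgroup R G" and th: "\<theta> \<in> F R (carrier G)" using q qq unfolding VV_def by auto
    have "R \<subseteq> carrier G" using subgroup.subset[OF s] .
    moreover have "\<theta> \<in> R \<rightarrow>\<^sub>E carrier G" using F_props[OF fs th] unfolding PiE_def Pi_def by auto
    ultimately show "q \<in> Sigma (Pow (carrier G)) (\<lambda>R. R \<rightarrow>\<^sub>E carrier G)" using qq by simp
  qed
  show "finite (Sigma (Pow (carrier G)) (\<lambda>R. R \<rightarrow>\<^sub>E carrier G))"
    using fin by (intro finite_SigmaI finite_PiE) (auto intro: finite_subset)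
qed

lemma VV_sub: "q \<in> VV G F \<Longrightarrow> fst q \<subseteq> carrier G"
  unfolding VV_def using subgroup.subset by blast

lemma VV_card_le: "q \<in> VV G F \<Longrightarrow> card (fst q) \<le> card (carrier G)"
  using card_mono[OF fin VV_sub] .

lemma VV_card_pos: "q \<in> VV G F \<Longrightarrow> 0 < card (fst q)"
  unfolding VV_def using fin
  by (metis (no_types, lifting) card_gt_0_iff mem_Collect_eq rev_finite_subset subgroup.subset subgroup_nonempty)

lemma sext_sub: "sext G F P \<chi> \<subseteq> VV G F" unfolding sext_def by auto

lemma sext_finite: "finite (sext G F P \<chi>)" using VV_finite sext_sub by (rule finite_subset[rotated])

lemma sext_card: "q \<in> sext G F P \<chi> \<Longrightarrow> card P < card (fst q)"
proof -
  assume q: "q \<in> sext G F P \<chi>"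
  then have "P \<subset> fst q" "q \<in> VV G F" unfolding sext_def by auto
  moreover have "finite (fst q)" using finite_subset[OF VV_sub[OF \<open>q \<in> VV G F\<close>] fin] .
  ultimately show ?thesis by (simp add: psubset_card_mono)
qed

lemma kf_stable: "card (carrier G) < card R + n \<Longrightarrow> kf G F (Suc n) R \<theta> = kf G F n R \<theta>"
proof (induction n arbitrary: R \<theta>)
  case 0
  have "(R, \<theta>) \<notin> VV G F" using VV_card_le[of "(R, \<theta>)"] 0 by auto
  then show ?case by simp
next
  case (Suc n)
  have s1: "(\<Sum>q\<in>sext G F P \<chi>. kf G F (Suc n) (fst q) (snd q)) = (\<Sum>q\<in>sext G F P \<chi>. kf G F n (fst q) (snd q))"
    if "card P = card R" for P \<chi>
  proof (rule sum.cong[OF refl])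
    fix q assume "q \<in> sext G F P \<chi>"
    then have "card P < card (fst q)" by (rule sext_card)
    then have "card (carrier G) < card (fst q) + n" using Suc.prems that by simp
    then show "kf G F (Suc n) (fst q) (snd q) = kf G F n (fst q) (snd q)" by (rule Suc.IH)
  qed
  have "cf G F (Suc n) (card R) = cf G F n (card R)"
    unfolding cf_def using s1 by (auto intro!: sum.cong)
  then show ?case using s1[of R \<theta>] by (simp only: kf_Suc)
qed

lemma kk_eq: "q \<in> VV G F \<Longrightarrow> kf G F (card (carrier G)) (fst q) (snd q) = kk G F (fst q) (snd q)"
  unfolding kk_def using VV_card_pos[of q] by (intro kf_stable[symmetric]) simp

lemma kk_rec:
  assumes q: "(P, \<chi>) \<in> VV G F"
  shows "kk G F P \<chi> + (\<Sum>q\<in>sext G F P \<chi>. kk G F (fst q) (snd q)) = cc G F (card P)"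
proof -
  define n where "n = card (carrier G)"
  have e: "(\<Sum>q\<in>sext G F P \<chi>. kf G F n (fst q) (snd q)) = (\<Sum>q\<in>sext G F P \<chi>. kk G F (fst q) (snd q))"
    unfolding n_def
  proof (rule sum.cong[OF refl])
    fix q assume "q \<in> sext G F P \<chi>"
    then have "q \<in> VV G F" using sext_sub by blast
    then show "kf G F (card (carrier G)) (fst q) (snd q) = kk G F (fst q) (snd q)" by (rule kk_eq)
  qed
  have fl: "finite {p \<in> VV G F. card (fst p) = card P}" using VV_finite by simp
  have "(\<Sum>q\<in>sext G F P \<chi>. kf G F n (fst q) (snd q)) \<le>
      (\<Sum>p\<in>{p \<in> VV G F. card (fst p) = card P}. \<Sum>q\<in>sext G F (fst p) (snd p). kf G F n (fst q) (snd q))"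
    using member_le_sum[OF _ _ fl, of "(P, \<chi>)" "\<lambda>p. \<Sum>q\<in>sext G F (fst p) (snd p). kf G F n (fst q) (snd q)"] q
    by simp
  then have le: "(\<Sum>q\<in>sext G F P \<chi>. kf G F n (fst q) (snd q)) \<le> cf G F n (card P)" unfolding cf_def by simp
  have "kk G F P \<chi> = cf G F n (card P) - (\<Sum>q\<in>sext G F P \<chi>. kf G F n (fst q) (snd q))"
    unfolding kk_def n_def using q by (simp only: kf_Suc if_True)
  then show ?thesis using le e unfolding cc_def n_def by simp
qed

lemma cc_pos: "1 \<le> cc G F m" unfolding cc_def cf_def by simp

lemma Gsum:
  assumes P: "subgroup P G" and ext: "\<psi> \<in> extensional P"
  shows "(\<Sum>q\<in>{q \<in> VV G F. P \<subseteq> fst q \<and> restrict (snd q) P = \<psi>}. kk G F (fst q) (snd q)) =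
         (if \<psi> \<in> F P (carrier G) then cc G F (card P) else 0)"
proof (cases "\<psi> \<in> F P (carrier G)")
  case True
  have "{q \<in> VV G F. P \<subseteq> fst q \<and> restrict (snd q) P = \<psi>} = insert (P, \<psi>) (sext G F P \<psi>)"
  proof
    show "{q \<in> VV G F. P \<subseteq> fst q \<and> restrict (snd q) P = \<psi>} \<subseteq> insert (P, \<psi>) (sext G F P \<psi>)"
    proof
      fix q assume q: "q \<in> {q \<in> VV G F. P \<subseteq> fst q \<and> restrict (snd q) P = \<psi>}"
      show "q \<in> insert (P, \<psi>) (sext G F P \<psi>)"
      proof (cases "fst q = P")
        case True
        have "snd q \<in> F (fst q) (carrier G)" using q unfolding VV_def by auto
        then have "restrict (snd q) (fst q) = snd q" by (rule F_ext[OF fs])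
        then have "snd q = \<psi>" using q True by simp
        then show ?thesis using True by (metis insertI1 prod.collapse)
      next
        case False
        then show ?thesis using q unfolding sext_def by auto
      qed
    qed
    show "insert (P, \<psi>) (sext G F P \<psi>) \<subseteq> {q \<in> VV G F. P \<subseteq> fst q \<and> restrict (snd q) P = \<psi>}"
      using True P ext unfolding sext_def VV_def by (auto simp: extensional_restrict)
  qed
  moreover have "(P, \<psi>) \<notin> sext G F P \<psi>" unfolding sext_def by auto
  moreover have "(P, \<psi>) \<in> VV G F" using True P unfolding VV_def by simp
  ultimately show ?thesis using kk_rec[of P \<psi>] True sext_finite by simp
next
  case False
  have e: "{q \<in> VV G F. P \<subseteq> fst q \<and> restrict (snd q) P = \<psi>} = {}"
  proof (rule ccontr)
    assume "{q \<in> VV G F. P \<subseteq> fst q \<and> restrict (snd q) P = \<psi>} \<noteq> {}"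
    then obtain q where q: "q \<in> VV G F" "P \<subseteq> fst q" "restrict (snd q) P = \<psi>" by blast
    have "restrict (snd q) P \<in> F P (carrier G)"
      using F_restr[OF fs _ P q(2)] q(1) unfolding VV_def by blast
    then show False using q(3) False by simp
  qed
  show ?thesis by (simp only: e sum.empty False if_False)
qed

end
end




definition BXs :: "('a,'m) monoid_scheme \<Rightarrow> ('a set \<Rightarrow> 'a set \<Rightarrow> ('a \<Rightarrow> 'a) set) \<Rightarrow> (('a \<times> 'a) set \<times> nat) set" where
  "BXs G F = (\<Union>q\<in>VV G F. tb_carrier G (fst q) (snd q) \<times> {..< card (fst q) * kk G F (fst q) (snd q)})"

definition lft :: "('a,'m) monoid_scheme \<Rightarrow> 'a \<Rightarrow> (('a \<times> 'a) set \<times> nat) \<Rightarrow> (('a \<times> 'a) set \<times> nat)" where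
  "lft G s z = (tb_left G s (fst z), snd z)"

definition rgt :: "('a,'m) monoid_scheme \<Rightarrow> (('a \<times> 'a) set \<times> nat) \<Rightarrow> 'a \<Rightarrow> (('a \<times> 'a) set \<times> nat)" where
  "rgt G z t = (tb_right G (fst z) t, snd z)"

context group
begin

lemma conj_back [simp]: "x \<in> carrier G \<Longrightarrow> u \<in> carrier G \<Longrightarrow> x \<otimes> (inv x \<otimes> u \<otimes> x) \<otimes> inv x = u"
  by (simp add: m_assoc)

lemma tb_left_one: "C \<subseteq> carrier G \<times> carrier G \<Longrightarrow> tb_left G \<one> C = C"
  unfolding tb_left_def by (force simp: image_iff)

lemma tb_right_one: "C \<subseteq> carrier G \<times> carrier G \<Longrightarrow> tb_right G C \<one> = C"
  unfolding tb_right_def by (force simp: image_iff)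

lemma tb_left_mult: "C \<subseteq> carrier G \<times> carrier G \<Longrightarrow> s \<in> carrier G \<Longrightarrow> t \<in> carrier G \<Longrightarrow>
   tb_left G s (tb_left G t C) = tb_left G (s \<otimes> t) C"
  unfolding tb_left_def image_image by (rule image_cong) (auto simp: m_assoc)

lemma tb_right_mult: "C \<subseteq> carrier G \<times> carrier G \<Longrightarrow> s \<in> carrier G \<Longrightarrow> t \<in> carrier G \<Longrightarrow>
   tb_right G (tb_right G C s) t = tb_right G C (s \<otimes> t)"
  unfolding tb_right_def image_image by (rule image_cong) (auto simp: m_assoc)

lemma tb_left_right: "tb_left G s (tb_right G C t) = tb_right G (tb_left G s C) t"
  unfolding tb_left_def tb_right_def image_image by (rule image_cong) auto

context
  fixes F :: "'a set \<Rightarrow> 'a set \<Rightarrow> ('a \<Rightarrow> 'a) set"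
  assumes fs: "fusion_system G F" and fin: "finite (carrier G)"
begin

lemma VV_tbloc: "q \<in> VV G F \<Longrightarrow> tbloc G (fst q) (snd q)"
  unfolding VV_def using F_props[OF fs]
  by (intro tbloc.intro tbloc_axioms.intro is_group) auto

lemma comp_unique:
  assumes q1: "q1 \<in> VV G F" and q2: "q2 \<in> VV G F"
    and C1: "C \<in> tb_carrier G (fst q1) (snd q1)" and C2: "C \<in> tb_carrier G (fst q2) (snd q2)"
  shows "q1 = q2"
proof -
  interpret T1: tbloc G "fst q1" "snd q1" by (rule VV_tbloc[OF q1])
  interpret T2: tbloc G "fst q2" "snd q2" by (rule VV_tbloc[OF q2])
  obtain x y where xy: "x \<in> carrier G" "y \<in> carrier G" "C = cls G (fst q1) (snd q1) x y"
    using C1 T1.tb_carrier_eq by auto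
  obtain x' y' where xy': "x' \<in> carrier G" "y' \<in> carrier G" "C = cls G (fst q2) (snd q2) x' y'"
    using C2 T2.tb_carrier_eq by auto
  have "(x, y) \<in> C" using T1.cls_self xy by simp
  then have C2': "C = cls G (fst q2) (snd q2) x y" using T2.cls_eq[OF xy'(1,2) xy(1,2)] xy' by simp
  have half: "R \<subseteq> R' \<and> (\<forall>r\<in>R. th r = th' r)"
    if "cls G R th x y = cls G R' th' x y" "tbloc G R th" "tbloc G R' th'" for R R' th th'
  proof -
    interpret A: tbloc G R th by fact
    interpret B: tbloc G R' th' by fact
    have "\<forall>r\<in>R. r \<in> R' \<and> th r = th' r"
    proof
      fix r assume r: "r \<in> R"
      have "(x \<otimes> r, inv (th r) \<otimes> y) \<in> cls G R' th' x y" using that(1) r unfolding cls_def by auto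
      then obtain r' where r': "r' \<in> R'" "x \<otimes> r = x \<otimes> r'" "inv (th r) \<otimes> y = inv (th' r') \<otimes> y"
        unfolding B.cls_mem by blast
      have "r = r'" using r'(2) xy(1) A.Rsub[OF r] B.Rsub[OF r'(1)] l_cancel by blast
      moreover have "inv (th r) = inv (th' r')" using r'(3) xy(2) A.th_closed[OF r] B.th_closed[OF r'(1)] r_cancel
        by (meson inv_closed)
      then have "th r = th' r'" using A.th_closed[OF r] B.th_closed[OF r'(1)] by (metis inv_inv)
      ultimately show "r \<in> R' \<and> th r = th' r" using r'(1) by simp
    qed
    then show ?thesis by blast
  qed
  have eq: "cls G (fst q1) (snd q1) x y = cls G (fst q2) (snd q2) x y" using xy(3) C2' by simp
  have a: "fst q1 \<subseteq> fst q2 \<and> (\<forall>r\<in>fst q1. snd q1 r = snd q2 r)"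
    by (rule half[OF eq VV_tbloc[OF q1] VV_tbloc[OF q2]])
  have b: "fst q2 \<subseteq> fst q1"
    using half[OF eq[symmetric] VV_tbloc[OF q2] VV_tbloc[OF q1]] by blast
  have f: "fst q1 = fst q2" using a b by blast
  have "snd q1 \<in> F (fst q1) (carrier G)" using q1 unfolding VV_def by simp
  then have e1: "snd q1 \<in> extensional (fst q1)" by (rule conjunct1[OF F_props[OF fs]])
  have "snd q2 \<in> F (fst q2) (carrier G)" using q2 unfolding VV_def by simp
  then have "snd q2 \<in> extensional (fst q2)" by (rule conjunct1[OF F_props[OF fs]])
  then have e2: "snd q2 \<in> extensional (fst q1)" using f by simp
  have "snd q1 = snd q2"
  proof (rule extensionalityI[OF e1 e2])
    fix r assume "r \<in> fst q1" then show "snd q1 r = snd q2 r" using a by blast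
  qed
  then show ?thesis using f by (simp add: prod_eq_iff)
qed


lemma tbc_sub: "q \<in> VV G F \<Longrightarrow> C \<in> tb_carrier G (fst q) (snd q) \<Longrightarrow> C \<subseteq> carrier G \<times> carrier G"
proof -
  assume q: "q \<in> VV G F" and C: "C \<in> tb_carrier G (fst q) (snd q)"
  interpret T: tbloc G "fst q" "snd q" by (rule VV_tbloc[OF q])
  obtain x y where "x \<in> carrier G" "y \<in> carrier G" "C = cls G (fst q) (snd q) x y"
    using C T.tb_carrier_eq by auto
  then show ?thesis using T.cls_sub by simp
qed

lemma tbc_finite: "q \<in> VV G F \<Longrightarrow> finite (tb_carrier G (fst q) (snd q))"
proof -
  assume q: "q \<in> VV G F"
  have "tb_carrier G (fst q) (snd q) \<subseteq> Pow (carrier G \<times> carrier G)" using tbc_sub[OF q] by blast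
  then show ?thesis using fin by (meson finite_Pow_iff finite_SigmaI finite_subset)
qed

lemma BX_mem: "z \<in> BXs G F \<longleftrightarrow> (\<exists>q\<in>VV G F. fst z \<in> tb_carrier G (fst q) (snd q) \<and> snd z < card (fst q) * kk G F (fst q) (snd q))"
  unfolding BXs_def by (cases z) auto

lemma BX_finite: "finite (BXs G F)"
  unfolding BXs_def using VV_finite[OF fs fin] tbc_finite by blast

lemma tbc_left:
  assumes q: "q \<in> VV G F" and C: "C \<in> tb_carrier G (fst q) (snd q)" and s: "s \<in> carrier G"
  shows "tb_left G s C \<in> tb_carrier G (fst q) (snd q)"
proof -
  interpret T: tbloc G "fst q" "snd q" by (rule VV_tbloc[OF q])
  obtain x y where xy: "x \<in> carrier G" "y \<in> carrier G" "C = cls G (fst q) (snd q) x y"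
    using C T.tb_carrier_eq by auto
  have "tb_left G s C = cls G (fst q) (snd q) (s \<otimes> x) y" using T.tb_left_cls[OF s xy(1)] xy(3) by simp
  then show ?thesis using T.tb_carrier_eq s xy by auto
qed

lemma tbc_right:
  assumes q: "q \<in> VV G F" and C: "C \<in> tb_carrier G (fst q) (snd q)" and t: "t \<in> carrier G"
  shows "tb_right G C t \<in> tb_carrier G (fst q) (snd q)"
proof -
  interpret T: tbloc G "fst q" "snd q" by (rule VV_tbloc[OF q])
  obtain x y where xy: "x \<in> carrier G" "y \<in> carrier G" "C = cls G (fst q) (snd q) x y"
    using C T.tb_carrier_eq by auto
  have "tb_right G C t = cls G (fst q) (snd q) x (y \<otimes> t)" using T.tb_right_cls[OF t xy(2)] xy(3) by simp
  then show ?thesis using T.tb_carrier_eq t xy by auto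
qed

lemma BX_biset: "biset G (BXs G F) (lft G) (rgt G)"
  unfolding biset_def
proof (intro conjI ballI)
  fix z s assume z: "z \<in> BXs G F" and s: "s \<in> carrier G"
  from z obtain q where q: "q \<in> VV G F" "fst z \<in> tb_carrier G (fst q) (snd q)"
    "snd z < card (fst q) * kk G F (fst q) (snd q)" unfolding BX_mem by blast
  show "lft G s z \<in> BXs G F" unfolding BX_mem lft_def using q tbc_left[OF q(1,2) s] by auto
  show "rgt G z s \<in> BXs G F" unfolding BX_mem rgt_def using q tbc_right[OF q(1,2) s] by auto
next
  fix z assume z: "z \<in> BXs G F"
  from z obtain q where q: "q \<in> VV G F" "fst z \<in> tb_carrier G (fst q) (snd q)" unfolding BX_mem by blast
  have sub: "fst z \<subseteq> carrier G \<times> carrier G" by (rule tbc_sub[OF q])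
  show "lft G \<one> z = z" unfolding lft_def using tb_left_one[OF sub] by simp
  show "rgt G z \<one> = z" unfolding rgt_def using tb_right_one[OF sub] by simp
next
  fix z s t assume z: "z \<in> BXs G F" and s: "s \<in> carrier G" and t: "t \<in> carrier G"
  from z obtain q where q: "q \<in> VV G F" "fst z \<in> tb_carrier G (fst q) (snd q)" unfolding BX_mem by blast
  have sub: "fst z \<subseteq> carrier G \<times> carrier G" by (rule tbc_sub[OF q])
  show "lft G s (lft G t z) = lft G (s \<otimes> t) z" unfolding lft_def using tb_left_mult[OF sub s t] by simp
  show "rgt G (rgt G z s) t = rgt G z (s \<otimes> t)" unfolding rgt_def using tb_right_mult[OF sub s t] by simp
  show "lft G s (rgt G z t) = rgt G (lft G s z) t" unfolding lft_def rgt_def using tb_left_right by simp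
qed

end
end



context tbloc
begin

lemma cls_fixed:
  assumes x: "x \<in> carrier G" and y: "y \<in> carrier G" and PG: "P \<subseteq> carrier G" and cP: "\<chi> ` P \<subseteq> carrier G"
  shows "(\<forall>u\<in>P. tb_left G u (cls G R \<theta> x y) = tb_right G (cls G R \<theta> x y) (\<chi> u)) \<longleftrightarrow>
         (\<forall>u\<in>P. inv x \<otimes> u \<otimes> x \<in> R \<and> \<theta> (inv x \<otimes> u \<otimes> x) = y \<otimes> \<chi> u \<otimes> inv y)"
proof -
  have "tb_left G u (cls G R \<theta> x y) = tb_right G (cls G R \<theta> x y) (\<chi> u) \<longleftrightarrow>
        inv x \<otimes> u \<otimes> x \<in> R \<and> \<theta> (inv x \<otimes> u \<otimes> x) = y \<otimes> \<chi> u \<otimes> inv y" if u: "u \<in> P" for u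
  proof -
    have uG: "u \<in> carrier G" using u PG by blast
    have cu: "\<chi> u \<in> carrier G" using u cP by blast
    show ?thesis using tb_left_cls[OF uG x] tb_right_cls[OF cu y] cls_fix_iff[OF x y uG cu] by simp
  qed
  then show ?thesis by blast
qed

lemma card_pairs:
  assumes fin: "finite (carrier G)" and PG: "P \<subseteq> carrier G" and cP: "\<chi> ` P \<subseteq> carrier G"
  shows "card {p \<in> carrier G \<times> carrier G. \<forall>u\<in>P. inv (fst p) \<otimes> u \<otimes> fst p \<in> R \<and>
            \<theta> (inv (fst p) \<otimes> u \<otimes> fst p) = snd p \<otimes> \<chi> u \<otimes> inv (snd p)}
       = card {C \<in> tb_carrier G R \<theta>. \<forall>u\<in>P. tb_left G u C = tb_right G C (\<chi> u)} * card R"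
proof -
  define FixC where "FixC = {C \<in> tb_carrier G R \<theta>. \<forall>u\<in>P. tb_left G u C = tb_right G C (\<chi> u)}"
  define cond where "cond p \<longleftrightarrow> (\<forall>u\<in>P. inv (fst p) \<otimes> u \<otimes> fst p \<in> R \<and>
            \<theta> (inv (fst p) \<otimes> u \<otimes> fst p) = snd p \<otimes> \<chi> u \<otimes> inv (snd p))" for p
  have cf: "C \<in> FixC \<longleftrightarrow> (\<exists>x\<in>carrier G. \<exists>y\<in>carrier G. C = cls G R \<theta> x y \<and> cond (x, y))" for C
  proof
    assume "C \<in> FixC"
    then obtain x y where xy: "x \<in> carrier G" "y \<in> carrier G" "C = cls G R \<theta> x y"
      and fx: "\<forall>u\<in>P. tb_left G u C = tb_right G C (\<chi> u)"
      unfolding FixC_def using tb_carrier_eq by auto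
    then have "cond (x, y)" using cls_fixed[OF xy(1,2) PG cP] unfolding cond_def by simp
    then show "\<exists>x\<in>carrier G. \<exists>y\<in>carrier G. C = cls G R \<theta> x y \<and> cond (x, y)" using xy by blast
  next
    assume "\<exists>x\<in>carrier G. \<exists>y\<in>carrier G. C = cls G R \<theta> x y \<and> cond (x, y)"
    then obtain x y where xy: "x \<in> carrier G" "y \<in> carrier G" "C = cls G R \<theta> x y" "cond (x, y)" by blast
    have "C \<in> tb_carrier G R \<theta>" using xy tb_carrier_eq by auto
    moreover have "\<forall>u\<in>P. tb_left G u C = tb_right G C (\<chi> u)"
      using cls_fixed[OF xy(1,2) PG cP] xy(3,4) unfolding cond_def by simp
    ultimately show "C \<in> FixC" unfolding FixC_def by simp
  qed
  have un: "{p \<in> carrier G \<times> carrier G. cond p} = \<Union> FixC"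
  proof
    show "{p \<in> carrier G \<times> carrier G. cond p} \<subseteq> \<Union> FixC"
    proof
      fix p assume p: "p \<in> {p \<in> carrier G \<times> carrier G. cond p}"
      obtain x y where pe: "p = (x, y)" by fastforce
      have xy: "x \<in> carrier G" "y \<in> carrier G" "cond (x, y)" using p pe by auto
      have "cls G R \<theta> x y \<in> FixC" using cf xy by blast
      moreover have "p \<in> cls G R \<theta> x y" using cls_self xy pe by simp
      ultimately show "p \<in> \<Union> FixC" by blast
    qed
  next
    show "\<Union> FixC \<subseteq> {p \<in> carrier G \<times> carrier G. cond p}"
    proof
      fix p assume "p \<in> \<Union> FixC"
      then obtain C where C: "C \<in> FixC" "p \<in> C" by blast
      then obtain x y where xy: "x \<in> carrier G" "y \<in> carrier G" "C = cls G R \<theta> x y" "cond (x, y)"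
        using cf by blast
      obtain a b where pe: "p = (a, b)" by fastforce
      have ab: "a \<in> carrier G" "b \<in> carrier G" using cls_sub[OF xy(1,2)] C(2) xy(3) pe by auto
      have "cls G R \<theta> a b = C" using cls_eq[OF xy(1,2) ab] C(2) xy(3) pe by simp
      then have "C \<in> FixC \<longleftrightarrow> cond (a, b)"
        using cls_fixed[OF ab PG cP] C(1) unfolding FixC_def cond_def by auto
      then show "p \<in> {p \<in> carrier G \<times> carrier G. cond p}" using C(1) ab pe by simp
    qed
  qed
  have finC: "finite FixC"
  proof (rule finite_subset)
    show "FixC \<subseteq> Pow (carrier G \<times> carrier G)" using cf cls_sub by blast
    show "finite (Pow (carrier G \<times> carrier G))" using fin by simp
  qed
  have cardC: "card C = card R" if "C \<in> FixC" for C
    using cf[of C] that cls_card by auto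
  have "card (\<Union> FixC) = (\<Sum>C\<in>FixC. card C)"
  proof (rule card_Union_disjoint)
    show "pairwise disjnt FixC"
    proof (rule pairwiseI)
      fix C D assume C: "C \<in> FixC" and D: "D \<in> FixC" and ne: "C \<noteq> D"
      obtain x y where xy: "x \<in> carrier G" "y \<in> carrier G" "C = cls G R \<theta> x y" using cf[THEN iffD1, OF C] by blast
      obtain x' y' where xy': "x' \<in> carrier G" "y' \<in> carrier G" "D = cls G R \<theta> x' y'" using cf[THEN iffD1, OF D] by blast
      have "D \<inter> C = {}"
      proof (rule ccontr)
        assume "D \<inter> C \<noteq> {}"
        then have "cls G R \<theta> x' y' \<inter> cls G R \<theta> x y \<noteq> {}" using xy(3) xy'(3) by simp
        then have "cls G R \<theta> x' y' = cls G R \<theta> x y" by (rule cls_disj[OF xy(1,2) xy'(1,2)])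
        then have "D = C" using xy(3) xy'(3) by simp
        then show False using ne by simp
      qed
      then show "disjnt C D" unfolding disjnt_def by (simp add: Int_commute)
    qed
    show "finite C" if Cf: "C \<in> FixC" for C
    proof -
      obtain x y where xy: "x \<in> carrier G" "y \<in> carrier G" "C = cls G R \<theta> x y"
        using cf[THEN iffD1, OF Cf] by blast
      show ?thesis using finite_subset[OF cls_sub[OF xy(1,2)] finite_cartesian_product[OF fin fin]] xy(3) by simp
    qed
  qed
  also have "\<dots> = (\<Sum>C\<in>FixC. card R)" by (rule sum.cong[OF refl cardC])
  also have "\<dots> = card FixC * card R" by simp
  finally have "card {p \<in> carrier G \<times> carrier G. cond p} = card FixC * card R" by (simp only: un)
  then show ?thesis unfolding FixC_def cond_def .
qed

end




context group
begin

context
  fixes F :: "'a set \<Rightarrow> 'a set \<Rightarrow> ('a \<Rightarrow> 'a) set"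
  assumes fs: "fusion_system G F" and fin: "finite (carrier G)"
begin

lemma cond_iff:
  assumes PG: "P \<subseteq> carrier G" and x: "x \<in> carrier G" and y: "y \<in> carrier G"
  shows "(\<forall>u\<in>P. inv x \<otimes> u \<otimes> x \<in> R \<and> \<theta> (inv x \<otimes> u \<otimes> x) = y \<otimes> \<chi> u \<otimes> inv y) \<longleftrightarrow>
    ((\<lambda>u. inv x \<otimes> u \<otimes> x) ` P \<subseteq> R \<and>
     restrict \<theta> ((\<lambda>u. inv x \<otimes> u \<otimes> x) ` P) = restrict (\<lambda>v. y \<otimes> \<chi> (x \<otimes> v \<otimes> inv x) \<otimes> inv y) ((\<lambda>u. inv x \<otimes> u \<otimes> x) ` P))"
proof
  assume h: "\<forall>u\<in>P. inv x \<otimes> u \<otimes> x \<in> R \<and> \<theta> (inv x \<otimes> u \<otimes> x) = y \<otimes> \<chi> u \<otimes> inv y"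
  have "(\<lambda>u. inv x \<otimes> u \<otimes> x) ` P \<subseteq> R" using h by blast
  moreover have "restrict \<theta> ((\<lambda>u. inv x \<otimes> u \<otimes> x) ` P) = restrict (\<lambda>v. y \<otimes> \<chi> (x \<otimes> v \<otimes> inv x) \<otimes> inv y) ((\<lambda>u. inv x \<otimes> u \<otimes> x) ` P)"
  proof (rule restrict_ext)
    fix v assume "v \<in> (\<lambda>u. inv x \<otimes> u \<otimes> x) ` P"
    then obtain u where u: "u \<in> P" "v = inv x \<otimes> u \<otimes> x" by blast
    have uG: "u \<in> carrier G" using u(1) PG by blast
    have "x \<otimes> v \<otimes> inv x = u" using u(2) uG x by simp
    then show "\<theta> v = y \<otimes> \<chi> (x \<otimes> v \<otimes> inv x) \<otimes> inv y" using h u by simp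
  qed
  ultimately show "(\<lambda>u. inv x \<otimes> u \<otimes> x) ` P \<subseteq> R \<and>
     restrict \<theta> ((\<lambda>u. inv x \<otimes> u \<otimes> x) ` P) = restrict (\<lambda>v. y \<otimes> \<chi> (x \<otimes> v \<otimes> inv x) \<otimes> inv y) ((\<lambda>u. inv x \<otimes> u \<otimes> x) ` P)"
    by blast
next
  assume h: "(\<lambda>u. inv x \<otimes> u \<otimes> x) ` P \<subseteq> R \<and>
     restrict \<theta> ((\<lambda>u. inv x \<otimes> u \<otimes> x) ` P) = restrict (\<lambda>v. y \<otimes> \<chi> (x \<otimes> v \<otimes> inv x) \<otimes> inv y) ((\<lambda>u. inv x \<otimes> u \<otimes> x) ` P)"
  show "\<forall>u\<in>P. inv x \<otimes> u \<otimes> x \<in> R \<and> \<theta> (inv x \<otimes> u \<otimes> x) = y \<otimes> \<chi> u \<otimes> inv y"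
  proof
    fix u assume u: "u \<in> P"
    have uG: "u \<in> carrier G" using u PG by blast
    have m: "inv x \<otimes> u \<otimes> x \<in> (\<lambda>u. inv x \<otimes> u \<otimes> x) ` P" using u by blast
    have "restrict \<theta> ((\<lambda>u. inv x \<otimes> u \<otimes> x) ` P) (inv x \<otimes> u \<otimes> x) =
          restrict (\<lambda>v. y \<otimes> \<chi> (x \<otimes> v \<otimes> inv x) \<otimes> inv y) ((\<lambda>u. inv x \<otimes> u \<otimes> x) ` P) (inv x \<otimes> u \<otimes> x)"
      using h by simp
    then have "\<theta> (inv x \<otimes> u \<otimes> x) = y \<otimes> \<chi> u \<otimes> inv y" using m uG x by simp
    moreover have "inv x \<otimes> u \<otimes> x \<in> R" using h m by blast
    ultimately show "inv x \<otimes> u \<otimes> x \<in> R \<and> \<theta> (inv x \<otimes> u \<otimes> x) = y \<otimes> \<chi> u \<otimes> inv y" by simp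
  qed
qed


lemma mark_formula:
  assumes P: "subgroup P G" and cP: "\<chi> ` P \<subseteq> carrier G"
  shows "card {z \<in> BXs G F. \<forall>u\<in>P. lft G u z = rgt G z (\<chi> u)} =
     card (carrier G) * card (carrier G) * (if restrict \<chi> P \<in> F P (carrier G) then cc G F (card P) else 0)"
proof -
  have PG: "P \<subseteq> carrier G" using subgroup.subset[OF P] .
  define b where "b q = card (fst q) * kk G F (fst q) (snd q)" for q :: "'a set \<times> ('a \<Rightarrow> 'a)"
  define FixC where "FixC q = {C \<in> tb_carrier G (fst q) (snd q). \<forall>u\<in>P. tb_left G u C = tb_right G C (\<chi> u)}"
    for q :: "'a set \<times> ('a \<Rightarrow> 'a)"
  define cond where "cond q p \<longleftrightarrow> (\<forall>u\<in>P. inv (fst p) \<otimes> u \<otimes> fst p \<in> fst q \<and>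
            snd q (inv (fst p) \<otimes> u \<otimes> fst p) = snd p \<otimes> \<chi> u \<otimes> inv (snd p))"
    for q :: "'a set \<times> ('a \<Rightarrow> 'a)" and p :: "'a \<times> 'a"
  define W where "W = (if restrict \<chi> P \<in> F P (carrier G) then cc G F (card P) else 0)"
  have S1: "{z \<in> BXs G F. \<forall>u\<in>P. lft G u z = rgt G z (\<chi> u)} = (\<Union>q\<in>VV G F. FixC q \<times> {..< b q})"
  proof
    show "{z \<in> BXs G F. \<forall>u\<in>P. lft G u z = rgt G z (\<chi> u)} \<subseteq> (\<Union>q\<in>VV G F. FixC q \<times> {..< b q})"
    proof
      fix z assume z: "z \<in> {z \<in> BXs G F. \<forall>u\<in>P. lft G u z = rgt G z (\<chi> u)}"
      then obtain q where q: "q \<in> VV G F" "fst z \<in> tb_carrier G (fst q) (snd q)" "snd z < b q"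
        unfolding BX_mem[OF fs fin] b_def by blast
      have "\<forall>u\<in>P. tb_left G u (fst z) = tb_right G (fst z) (\<chi> u)"
        using z unfolding lft_def rgt_def by auto
      then have "fst z \<in> FixC q" using q unfolding FixC_def by simp
      then show "z \<in> (\<Union>q\<in>VV G F. FixC q \<times> {..< b q})" using q by (cases z) auto
    qed
  next
    show "(\<Union>q\<in>VV G F. FixC q \<times> {..< b q}) \<subseteq> {z \<in> BXs G F. \<forall>u\<in>P. lft G u z = rgt G z (\<chi> u)}"
    proof
      fix z assume "z \<in> (\<Union>q\<in>VV G F. FixC q \<times> {..< b q})"
      then obtain q where q: "q \<in> VV G F" "fst z \<in> FixC q" "snd z < b q" by (cases z) auto
      have "z \<in> BXs G F" unfolding BX_mem[OF fs fin] using q unfolding FixC_def b_def by blast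
      moreover have "\<forall>u\<in>P. lft G u z = rgt G z (\<chi> u)"
        using q(2) unfolding FixC_def lft_def rgt_def by simp
      ultimately show "z \<in> {z \<in> BXs G F. \<forall>u\<in>P. lft G u z = rgt G z (\<chi> u)}" by simp
    qed
  qed
  have finV: "finite (VV G F)" by (rule VV_finite[OF fs fin])
  have finFix: "finite (FixC q)" if "q \<in> VV G F" for q
    using tbc_finite[OF fs fin that] unfolding FixC_def by simp
  have S2: "card (\<Union>q\<in>VV G F. FixC q \<times> {..< b q}) = (\<Sum>q\<in>VV G F. card (FixC q \<times> {..< b q}))"
  proof (rule card_UN_disjoint[OF finV])
    show "\<forall>q\<in>VV G F. finite (FixC q \<times> {..< b q})" using finFix by blast
    show "\<forall>q\<in>VV G F. \<forall>q'\<in>VV G F. q \<noteq> q' \<longrightarrow> (FixC q \<times> {..< b q}) \<inter> (FixC q' \<times> {..< b q'}) = {}"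
    proof (intro ballI impI)
      fix q q' assume q: "q \<in> VV G F" and q': "q' \<in> VV G F" and ne: "q \<noteq> q'"
      show "(FixC q \<times> {..< b q}) \<inter> (FixC q' \<times> {..< b q'}) = {}"
      proof (rule ccontr)
        assume "(FixC q \<times> {..< b q}) \<inter> (FixC q' \<times> {..< b q'}) \<noteq> {}"
        then obtain C where "C \<in> FixC q" "C \<in> FixC q'" by blast
        then have "C \<in> tb_carrier G (fst q) (snd q)" "C \<in> tb_carrier G (fst q') (snd q')"
          unfolding FixC_def by auto
        then have "q = q'" using comp_unique[OF fs fin q q'] by blast
        then show False using ne by simp
      qed
    qed
  qed
  have S3: "card (FixC q \<times> {..< b q}) = kk G F (fst q) (snd q) * card {p \<in> carrier G \<times> carrier G. cond q p}"
    if q: "q \<in> VV G F" for q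
  proof -
    interpret T: tbloc G "fst q" "snd q" by (rule VV_tbloc[OF fs fin q])
    have "card {p \<in> carrier G \<times> carrier G. cond q p} = card (FixC q) * card (fst q)"
      unfolding cond_def FixC_def by (rule T.card_pairs[OF fin PG cP])
    then show ?thesis unfolding b_def by (simp add: card_cartesian_product)
  qed
  have finGG: "finite (carrier G \<times> carrier G)" using fin by simp
  have S4: "kk G F (fst q) (snd q) * card {p \<in> carrier G \<times> carrier G. cond q p} =
      (\<Sum>p\<in>carrier G \<times> carrier G. if cond q p then kk G F (fst q) (snd q) else 0)" for q
    using sum.inter_filter[OF finGG, of "\<lambda>_. kk G F (fst q) (snd q)" "cond q"] by (simp add: mult.commute)
  have S5: "(\<Sum>q\<in>VV G F. if cond q p then kk G F (fst q) (snd q) else 0) = W"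
    if p: "p \<in> carrier G \<times> carrier G" for p
  proof -
    obtain x y where pe: "p = (x, y)" and x: "x \<in> carrier G" and y: "y \<in> carrier G" using p by blast
    define Px where "Px = (\<lambda>u. inv x \<otimes> u \<otimes> x) ` P"
    define \<psi> where "\<psi> = restrict (\<lambda>v. y \<otimes> \<chi> (x \<otimes> v \<otimes> inv x) \<otimes> inv y) Px"
    have ce: "cond q p \<longleftrightarrow> (Px \<subseteq> fst q \<and> restrict (snd q) Px = \<psi>)" for q
      unfolding cond_def pe Px_def \<psi>_def using cond_iff[OF PG x y] by simp
    have "(\<Sum>q\<in>VV G F. if cond q p then kk G F (fst q) (snd q) else 0) =
          (\<Sum>q\<in>{q \<in> VV G F. cond q p}. kk G F (fst q) (snd q))"
      using sum.inter_filter[OF finV, symmetric] by simp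
    also have "{q \<in> VV G F. cond q p} = {q \<in> VV G F. Px \<subseteq> fst q \<and> restrict (snd q) Px = \<psi>}"
      using ce by simp
    also have "(\<Sum>q\<in>{q \<in> VV G F. Px \<subseteq> fst q \<and> restrict (snd q) Px = \<psi>}. kk G F (fst q) (snd q)) =
        (if \<psi> \<in> F Px (carrier G) then cc G F (card Px) else 0)"
    proof (rule Gsum[OF fs fin])
      show "subgroup Px G" unfolding Px_def by (rule conj_subgroup[OF fs P x])
      show "\<psi> \<in> extensional Px" unfolding \<psi>_def by simp
    qed
    also have "\<dots> = W"
    proof -
      have "\<psi> \<in> F Px (carrier G) \<longleftrightarrow> restrict \<chi> P \<in> F P (carrier G)"
        unfolding \<psi>_def Px_def by (rule F_conj2_iff[OF fs P cP x y])
      moreover have "card Px = card P" unfolding Px_def by (rule conj_card[OF fs PG x])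
      ultimately show ?thesis unfolding W_def by simp
    qed
    finally show ?thesis .
  qed
  have "card {z \<in> BXs G F. \<forall>u\<in>P. lft G u z = rgt G z (\<chi> u)} =
      (\<Sum>q\<in>VV G F. \<Sum>p\<in>carrier G \<times> carrier G. if cond q p then kk G F (fst q) (snd q) else 0)"
    using S1 S2 S3 S4 by simp
  also have "\<dots> = (\<Sum>p\<in>carrier G \<times> carrier G. \<Sum>q\<in>VV G F. if cond q p then kk G F (fst q) (snd q) else 0)"
    by (rule sum.swap)
  also have "\<dots> = (\<Sum>p\<in>carrier G \<times> carrier G. W)" using S5 by (rule sum.cong[OF refl])
  also have "\<dots> = card (carrier G) * card (carrier G) * W" by (simp add: card_cartesian_product)
  finally show ?thesis unfolding W_def .
qed

end
end



definition act :: "('a,'m) monoid_scheme \<Rightarrow> ('a \<Rightarrow> 'a) \<Rightarrow> ('a \<times> 'a) \<Rightarrow> (('a \<times> 'a) set \<times> nat) \<Rightarrow> (('a \<times> 'a) set \<times> nat)" where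
  "act G \<rho> g z = lft G (\<rho> (fst g)) (rgt G z (inv\<^bsub>G\<^esub> (snd g)))"

context group
begin

lemma bs_cl: "biset G B l r \<Longrightarrow> x \<in> B \<Longrightarrow> s \<in> carrier G \<Longrightarrow> l s x \<in> B"
  unfolding biset_def by blast
lemma bs_cr: "biset G B l r \<Longrightarrow> x \<in> B \<Longrightarrow> s \<in> carrier G \<Longrightarrow> r x s \<in> B"
  unfolding biset_def by blast
lemma bs_l1: "biset G B l r \<Longrightarrow> x \<in> B \<Longrightarrow> l \<one> x = x"
  unfolding biset_def by blast
lemma bs_r1: "biset G B l r \<Longrightarrow> x \<in> B \<Longrightarrow> r x \<one> = x"
  unfolding biset_def by blast
lemma bs_ll: "biset G B l r \<Longrightarrow> x \<in> B \<Longrightarrow> s \<in> carrier G \<Longrightarrow> t \<in> carrier G \<Longrightarrow> l s (l t x) = l (s \<otimes> t) x"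
  unfolding biset_def by blast
lemma bs_rr: "biset G B l r \<Longrightarrow> x \<in> B \<Longrightarrow> s \<in> carrier G \<Longrightarrow> t \<in> carrier G \<Longrightarrow> r (r x s) t = r x (s \<otimes> t)"
  unfolding biset_def by blast
lemma bs_lr: "biset G B l r \<Longrightarrow> x \<in> B \<Longrightarrow> s \<in> carrier G \<Longrightarrow> t \<in> carrier G \<Longrightarrow> l s (r x t) = r (l s x) t"
  unfolding biset_def by blast

lemma bs_fix_iff:
  assumes bs: "biset G B l r" and x: "x \<in> B" and u: "u \<in> carrier G" and t: "t \<in> carrier G"
  shows "l u (r x (inv t)) = x \<longleftrightarrow> l u x = r x t"
proof
  assume h: "l u (r x (inv t)) = x"
  have lx: "l u x \<in> B" using bs_cl[OF bs x u] .
  have "r x t = r (l u (r x (inv t))) t" using h by simp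
  also have "\<dots> = r (r (l u x) (inv t)) t" using bs_lr[OF bs x u] t by simp
  also have "\<dots> = l u x" using bs_rr[OF bs lx] bs_r1[OF bs lx] t by simp
  finally show "l u x = r x t" by simp
next
  assume h: "l u x = r x t"
  have "l u (r x (inv t)) = r (l u x) (inv t)" using bs_lr[OF bs x u] t by simp
  also have "\<dots> = r (r x t) (inv t)" using h by simp
  also have "\<dots> = x" using bs_rr[OF bs x t] bs_r1[OF bs x] t by simp
  finally show "l u (r x (inv t)) = x" .
qed

context
  fixes F :: "'a set \<Rightarrow> 'a set \<Rightarrow> ('a \<Rightarrow> 'a) set" and Q
  assumes fs: "fusion_system G F" and fin: "finite (carrier G)" and Q: "subgroup Q G"
begin

lemma HQ_group: "group (G\<lparr>carrier := Q\<rparr> \<times>\<times> G)"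
  by (intro DirProd_group subgroup.subgroup_is_group[OF Q is_group] is_group)

lemma QG: "u \<in> Q \<Longrightarrow> u \<in> carrier G"
  using subgroup.subset[OF Q] by blast

lemma act_is:
  assumes rh: "\<rho> \<in> hom (G\<lparr>carrier := Q\<rparr>) G"
  shows "is_act (G\<lparr>carrier := Q\<rparr> \<times>\<times> G) (act G \<rho>) (BXs G F)"
proof -
  have bs: "biset G (BXs G F) (lft G) (rgt G)" by (rule BX_biset[OF fs fin])
  have rc: "\<rho> u \<in> carrier G" if "u \<in> Q" for u using rh that unfolding hom_def by auto
  have rm: "\<rho> (u \<otimes> v) = \<rho> u \<otimes> \<rho> v" if "u \<in> Q" "v \<in> Q" for u v using rh that unfolding hom_def by auto
  have r1: "\<rho> \<one> = \<one>"
  proof -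
    interpret gh: group_hom "G\<lparr>carrier := Q\<rparr>" G \<rho>
      by (intro group_hom.intro group_hom_axioms.intro subgroup.subgroup_is_group[OF Q is_group] is_group rh)
    show ?thesis using gh.hom_one by simp
  qed
  show ?thesis unfolding is_act_def
  proof (intro conjI ballI)
    fix g z assume g: "g \<in> carrier (G\<lparr>carrier := Q\<rparr> \<times>\<times> G)" and z: "z \<in> BXs G F"
    have g1: "fst g \<in> Q" and g2: "snd g \<in> carrier G" using g by auto
    show "act G \<rho> g z \<in> BXs G F" unfolding act_def
      using bs_cl[OF bs bs_cr[OF bs z] rc[OF g1]] g2 by simp
  next
    fix z assume z: "z \<in> BXs G F"
    show "act G \<rho> \<one>\<^bsub>G\<lparr>carrier := Q\<rparr> \<times>\<times> G\<^esub> z = z" unfolding act_def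
      using bs_r1[OF bs z] bs_l1[OF bs z] r1 by simp
  next
    fix g h z assume g: "g \<in> carrier (G\<lparr>carrier := Q\<rparr> \<times>\<times> G)" and h: "h \<in> carrier (G\<lparr>carrier := Q\<rparr> \<times>\<times> G)"
      and z: "z \<in> BXs G F"
    obtain g1 g2 where gg: "g = (g1, g2)" "g1 \<in> Q" "g2 \<in> carrier G" using g by auto
    obtain h1 h2 where hh: "h = (h1, h2)" "h1 \<in> Q" "h2 \<in> carrier G" using h by auto
    have gh: "g \<otimes>\<^bsub>G\<lparr>carrier := Q\<rparr> \<times>\<times> G\<^esub> h = (g1 \<otimes> h1, g2 \<otimes> h2)" using gg hh by simp
    have z1: "rgt G z (inv h2) \<in> BXs G F" using bs_cr[OF bs z] hh by simp
    have z2: "rgt G (rgt G z (inv h2)) (inv g2) \<in> BXs G F" using bs_cr[OF bs z1] gg by simp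
    have "act G \<rho> g (act G \<rho> h z) = lft G (\<rho> g1) (rgt G (lft G (\<rho> h1) (rgt G z (inv h2))) (inv g2))"
      unfolding act_def gg hh by simp
    also have "\<dots> = lft G (\<rho> g1) (lft G (\<rho> h1) (rgt G (rgt G z (inv h2)) (inv g2)))"
      using bs_lr[OF bs z1 rc[OF hh(2)]] gg(3) by simp
    also have "\<dots> = lft G (\<rho> g1 \<otimes> \<rho> h1) (rgt G (rgt G z (inv h2)) (inv g2))"
      using bs_ll[OF bs z2 rc[OF gg(2)] rc[OF hh(2)]] .
    also have "\<dots> = lft G (\<rho> (g1 \<otimes> h1)) (rgt G z (inv h2 \<otimes> inv g2))"
      using bs_rr[OF bs z] rm[OF gg(2) hh(2)] gg(3) hh(3) by simp
    also have "\<dots> = act G \<rho> (g \<otimes>\<^bsub>G\<lparr>carrier := Q\<rparr> \<times>\<times> G\<^esub> h) z"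
      unfolding act_def gh using gg(3) hh(3) by (simp add: inv_mult_group)
    finally show "act G \<rho> g (act G \<rho> h z) = act G \<rho> (g \<otimes>\<^bsub>G\<lparr>carrier := Q\<rparr> \<times>\<times> G\<^esub> h) z" .
  qed
qed


lemma conj_mult: "x \<in> carrier G \<Longrightarrow> a \<in> carrier G \<Longrightarrow> b \<in> carrier G \<Longrightarrow>
   (inv x \<otimes> a \<otimes> x) \<otimes> (inv x \<otimes> b \<otimes> x) = inv x \<otimes> (a \<otimes> b) \<otimes> x"
  by (simp add: m_assoc)

lemma conj_inv: "x \<in> carrier G \<Longrightarrow> a \<in> carrier G \<Longrightarrow> inv (inv x \<otimes> a \<otimes> x) = inv x \<otimes> inv a \<otimes> x"
  by (simp add: inv_mult_group m_assoc)

lemma stab_graph: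
  assumes rh: "\<rho> \<in> hom (G\<lparr>carrier := Q\<rparr>) G" and z: "z \<in> BXs G F"
  shows "\<exists>P \<chi>. subgroup P G \<and> P \<subseteq> Q \<and> \<chi> ` P \<subseteq> carrier G \<and>
           stab_of (G\<lparr>carrier := Q\<rparr> \<times>\<times> G) (act G \<rho>) z = (\<lambda>u. (u, \<chi> u)) ` P"
proof -
  have bs: "biset G (BXs G F) (lft G) (rgt G)" by (rule BX_biset[OF fs fin])
  interpret gh: group_hom "G\<lparr>carrier := Q\<rparr>" G \<rho>
    by (intro group_hom.intro group_hom_axioms.intro subgroup.subgroup_is_group[OF Q is_group] is_group rh)
  have rc: "\<rho> u \<in> carrier G" if "u \<in> Q" for u using rh that unfolding hom_def by auto
  have rm: "\<rho> (u \<otimes> v) = \<rho> u \<otimes> \<rho> v" if "u \<in> Q" "v \<in> Q" for u v using rh that unfolding hom_def by auto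
  have r1: "\<rho> \<one> = \<one>" using gh.hom_one by simp
  have ri: "\<rho> (inv u) = inv (\<rho> u)" if "u \<in> Q" for u
    using gh.hom_inv[of u] that m_inv_consistent[OF Q that] by simp
  obtain q where q: "q \<in> VV G F" "fst z \<in> tb_carrier G (fst q) (snd q)" using z unfolding BX_mem[OF fs fin] by blast
  interpret T: tbloc G "fst q" "snd q" by (rule VV_tbloc[OF fs fin q(1)])
  obtain x0 y0 where xy: "x0 \<in> carrier G" "y0 \<in> carrier G" "fst z = cls G (fst q) (snd q) x0 y0"
    using q(2) T.tb_carrier_eq by auto
  define R where "R = fst q"
  define \<theta> where "\<theta> = snd q"
  define P where "P = {u \<in> Q. inv x0 \<otimes> \<rho> u \<otimes> x0 \<in> R}"
  define \<chi> where "\<chi> u = inv y0 \<otimes> \<theta> (inv x0 \<otimes> \<rho> u \<otimes> x0) \<otimes> y0" for u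
  have PQ: "P \<subseteq> Q" unfolding P_def by auto
  have sP: "subgroup P G"
  proof (rule subgroupI)
    show "P \<subseteq> carrier G" using PQ QG by blast
    have "\<one> \<in> P" unfolding P_def R_def using r1 T.R_one xy(1) subgroup.one_closed[OF Q] by simp
    then show "P \<noteq> {}" by blast
  next
    fix a assume a: "a \<in> P"
    then have aQ: "a \<in> Q" and aR: "inv x0 \<otimes> \<rho> a \<otimes> x0 \<in> R" unfolding P_def by auto
    have "inv x0 \<otimes> \<rho> (inv a) \<otimes> x0 = inv (inv x0 \<otimes> \<rho> a \<otimes> x0)"
      using ri[OF aQ] conj_inv[OF xy(1) rc[OF aQ]] by simp
    then have "inv x0 \<otimes> \<rho> (inv a) \<otimes> x0 \<in> R" using T.R_inv aR unfolding R_def by simp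
    then show "inv a \<in> P" unfolding P_def using aQ subgroup.m_inv_closed[OF Q] by simp
  next
    fix a b assume a: "a \<in> P" and b: "b \<in> P"
    then have aQ: "a \<in> Q" and aR: "inv x0 \<otimes> \<rho> a \<otimes> x0 \<in> R" and bQ: "b \<in> Q" and bR: "inv x0 \<otimes> \<rho> b \<otimes> x0 \<in> R"
      unfolding P_def by auto
    have "inv x0 \<otimes> \<rho> (a \<otimes> b) \<otimes> x0 = (inv x0 \<otimes> \<rho> a \<otimes> x0) \<otimes> (inv x0 \<otimes> \<rho> b \<otimes> x0)"
      using rm[OF aQ bQ] conj_mult[OF xy(1) rc[OF aQ] rc[OF bQ]] by simp
    then have "inv x0 \<otimes> \<rho> (a \<otimes> b) \<otimes> x0 \<in> R" using T.R_mult aR bR unfolding R_def by simp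
    then show "a \<otimes> b \<in> P" unfolding P_def using aQ bQ subgroup.m_closed[OF Q] by simp
  qed
  have chc: "\<chi> u \<in> carrier G" if "u \<in> P" for u
  proof -
    have "inv x0 \<otimes> \<rho> u \<otimes> x0 \<in> R" using that unfolding P_def by simp
    then have "\<theta> (inv x0 \<otimes> \<rho> u \<otimes> x0) \<in> carrier G" using T.th_closed unfolding R_def \<theta>_def by simp
    then show ?thesis unfolding \<chi>_def using xy by simp
  qed
  have key: "act G \<rho> (u, t) z = z \<longleftrightarrow> u \<in> P \<and> t = \<chi> u" if u: "u \<in> Q" and t: "t \<in> carrier G" for u t
  proof -
    have ru: "\<rho> u \<in> carrier G" using rc[OF u] .
    have "act G \<rho> (u, t) z = z \<longleftrightarrow> lft G (\<rho> u) z = rgt G z t"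
      unfolding act_def using bs_fix_iff[OF bs z ru t] by simp
    also have "\<dots> \<longleftrightarrow> tb_left G (\<rho> u) (fst z) = tb_right G (fst z) t"
      unfolding lft_def rgt_def by (simp add: prod_eq_iff)
    also have "\<dots> \<longleftrightarrow> cls G R \<theta> (\<rho> u \<otimes> x0) y0 = cls G R \<theta> x0 (y0 \<otimes> t)"
      unfolding xy(3) R_def \<theta>_def using T.tb_left_cls[OF ru xy(1)] T.tb_right_cls[OF t xy(2)] by simp
    also have "\<dots> \<longleftrightarrow> inv x0 \<otimes> \<rho> u \<otimes> x0 \<in> R \<and> \<theta> (inv x0 \<otimes> \<rho> u \<otimes> x0) = y0 \<otimes> t \<otimes> inv y0"
      unfolding R_def \<theta>_def by (rule T.cls_fix_iff[OF xy(1,2) ru t])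
    also have "\<dots> \<longleftrightarrow> u \<in> P \<and> t = \<chi> u"
    proof
      assume h: "inv x0 \<otimes> \<rho> u \<otimes> x0 \<in> R \<and> \<theta> (inv x0 \<otimes> \<rho> u \<otimes> x0) = y0 \<otimes> t \<otimes> inv y0"
      then have uP: "u \<in> P" unfolding P_def using u by simp
      have "\<chi> u = inv y0 \<otimes> (y0 \<otimes> t \<otimes> inv y0) \<otimes> y0" unfolding \<chi>_def using h by simp
      also have "\<dots> = t" using xy(2) t by (simp add: m_assoc)
      finally show "u \<in> P \<and> t = \<chi> u" using uP by simp
    next
      assume h: "u \<in> P \<and> t = \<chi> u"
      then have inR: "inv x0 \<otimes> \<rho> u \<otimes> x0 \<in> R" unfolding P_def by simp
      have thc: "\<theta> (inv x0 \<otimes> \<rho> u \<otimes> x0) \<in> carrier G" using T.th_closed inR unfolding R_def \<theta>_def by simp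
      have "y0 \<otimes> t \<otimes> inv y0 = y0 \<otimes> (inv y0 \<otimes> \<theta> (inv x0 \<otimes> \<rho> u \<otimes> x0) \<otimes> y0) \<otimes> inv y0"
        using h unfolding \<chi>_def by simp
      also have "\<dots> = \<theta> (inv x0 \<otimes> \<rho> u \<otimes> x0)" using xy(2) thc by (simp add: m_assoc)
      finally show "inv x0 \<otimes> \<rho> u \<otimes> x0 \<in> R \<and> \<theta> (inv x0 \<otimes> \<rho> u \<otimes> x0) = y0 \<otimes> t \<otimes> inv y0"
        using inR by simp
    qed
    finally show ?thesis .
  qed
  have "stab_of (G\<lparr>carrier := Q\<rparr> \<times>\<times> G) (act G \<rho>) z = (\<lambda>u. (u, \<chi> u)) ` P"
  proof
    show "stab_of (G\<lparr>carrier := Q\<rparr> \<times>\<times> G) (act G \<rho>) z \<subseteq> (\<lambda>u. (u, \<chi> u)) ` P"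
    proof
      fix g assume "g \<in> stab_of (G\<lparr>carrier := Q\<rparr> \<times>\<times> G) (act G \<rho>) z"
      then obtain u t where g: "g = (u, t)" "u \<in> Q" "t \<in> carrier G" "act G \<rho> (u, t) z = z"
        unfolding stab_of_def by auto
      then have "u \<in> P \<and> t = \<chi> u" using key by blast
      then show "g \<in> (\<lambda>u. (u, \<chi> u)) ` P" using g by blast
    qed
    show "(\<lambda>u. (u, \<chi> u)) ` P \<subseteq> stab_of (G\<lparr>carrier := Q\<rparr> \<times>\<times> G) (act G \<rho>) z"
    proof
      fix g assume "g \<in> (\<lambda>u. (u, \<chi> u)) ` P"
      then obtain u where u: "u \<in> P" "g = (u, \<chi> u)" by blast
      have uQ: "u \<in> Q" using u PQ by blast
      have "act G \<rho> (u, \<chi> u) z = z" using key[OF uQ chc[OF u(1)]] u by simp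
      then show "g \<in> stab_of (G\<lparr>carrier := Q\<rparr> \<times>\<times> G) (act G \<rho>) z"
        unfolding stab_of_def using u uQ chc by simp
    qed
  qed
  then show ?thesis using sP PQ chc by blast
qed

lemma fix_graph:
  assumes rh: "\<rho> \<in> hom (G\<lparr>carrier := Q\<rparr>) G" and PQ: "P \<subseteq> Q" and cP: "\<chi> ` P \<subseteq> carrier G"
  shows "fix_of (act G \<rho>) (BXs G F) ((\<lambda>u. (u, \<chi> u)) ` P) = {w \<in> BXs G F. \<forall>u\<in>P. lft G (\<rho> u) w = rgt G w (\<chi> u)}"
proof -
  have bs: "biset G (BXs G F) (lft G) (rgt G)" by (rule BX_biset[OF fs fin])
  have rc: "\<rho> u \<in> carrier G" if "u \<in> Q" for u using rh that unfolding hom_def by auto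
  have "(act G \<rho> (u, \<chi> u) w = w) \<longleftrightarrow> lft G (\<rho> u) w = rgt G w (\<chi> u)" if "w \<in> BXs G F" "u \<in> P" for w u
  proof -
    have uQ: "u \<in> Q" using that(2) PQ by blast
    have cu: "\<chi> u \<in> carrier G" using that(2) cP by blast
    show ?thesis unfolding act_def using bs_fix_iff[OF bs that(1) rc[OF uQ] cu] by simp
  qed
  then show ?thesis unfolding fix_of_def by auto
qed

lemma marks_eq:
  assumes ph: "\<phi> \<in> F Q (carrier G)" and P: "subgroup P G" and PQ: "P \<subseteq> Q" and cP: "\<chi> ` P \<subseteq> carrier G"
  shows "card {w \<in> BXs G F. \<forall>u\<in>P. lft G u w = rgt G w (\<chi> u)} =
         card {w \<in> BXs G F. \<forall>u\<in>P. lft G (\<phi> u) w = rgt G w (\<chi> u)}"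
proof -
  have "inj_on \<phi> Q" using F_props[OF fs ph] by (elim conjE)
  then have inj: "inj_on \<phi> P" using PQ by (rule inj_on_subset)
  have e: "{w \<in> BXs G F. \<forall>u\<in>P. lft G (\<phi> u) w = rgt G w (\<chi> u)} =
        {w \<in> BXs G F. \<forall>v\<in>\<phi> ` P. lft G v w = rgt G w ((\<chi> \<circ> inv_into P \<phi>) v)}"
    using inv_into_f_f[OF inj] by auto
  have sP: "subgroup (\<phi> ` P) G" and cd: "card (\<phi> ` P) = card P" using twist_subgroup[OF fs ph P PQ] by auto
  have cP': "(\<chi> \<circ> inv_into P \<phi>) ` (\<phi> ` P) \<subseteq> carrier G"
  proof
    fix w assume "w \<in> (\<chi> \<circ> inv_into P \<phi>) ` (\<phi> ` P)"
    then obtain u where u: "u \<in> P" "w = \<chi> (inv_into P \<phi> (\<phi> u))" by auto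
    then have "w = \<chi> u" using inv_into_f_f[OF inj] by simp
    then show "w \<in> carrier G" using cP u(1) by blast
  qed
  have iff: "restrict \<chi> P \<in> F P (carrier G) \<longleftrightarrow> restrict (\<chi> \<circ> inv_into P \<phi>) (\<phi> ` P) \<in> F (\<phi> ` P) (carrier G)"
    by (rule F_twist_iff[OF fs ph P PQ])
  show ?thesis unfolding e mark_formula[OF fs fin P cP] mark_formula[OF fs fin sP cP'] iff cd ..
qed

end
end



context group
begin

context
  fixes F :: "'a set \<Rightarrow> 'a set \<Rightarrow> ('a \<Rightarrow> 'a) set"
  assumes fs: "fusion_system G F" and fin: "finite (carrier G)"
begin

lemma stability:
  assumes Q: "subgroup Q G" and ph: "\<phi> \<in> F Q (carrier G)"
  shows "biset_iso Q (carrier G) (BXs G F) (lft G) (rgt G) (BXs G F) (\<lambda>u x. lft G (\<phi> u) x) (rgt G)"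
proof -
  define H where "H = G\<lparr>carrier := Q\<rparr> \<times>\<times> G"
  have bs: "biset G (BXs G F) (lft G) (rgt G)" by (rule BX_biset[OF fs fin])
  have gH: "group H" unfolding H_def by (rule HQ_group[OF fs fin Q])
  have finH: "finite (carrier H)" unfolding H_def using fin finite_subset[OF subgroup.subset[OF Q] fin] by simp
  have hid: "(\<lambda>u. u) \<in> hom (G\<lparr>carrier := Q\<rparr>) G" unfolding hom_def using subgroup.subset[OF Q] by auto
  have hph: "\<phi> \<in> hom (G\<lparr>carrier := Q\<rparr>) G" using F_props[OF fs ph] by (elim conjE)
  have ph1: "\<phi> \<one> = \<one>"
  proof -
    interpret gh: group_hom "G\<lparr>carrier := Q\<rparr>" G \<phi>
      by (intro group_hom.intro group_hom_axioms.intro subgroup.subgroup_is_group[OF Q is_group] is_group hph)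
    show ?thesis using gh.hom_one by simp
  qed
  have finB: "finite (BXs G F)" by (rule BX_finite[OF fs fin])
  have aid: "is_act H (act G (\<lambda>u. u)) (BXs G F)" unfolding H_def by (rule act_is[OF fs fin Q hid])
  have aph: "is_act H (act G \<phi>) (BXs G F)" unfolding H_def by (rule act_is[OF fs fin Q hph])
  have meq: "card (fix_of (act G (\<lambda>u. u)) (BXs G F) K) = card (fix_of (act G \<phi>) (BXs G F) K)"
    if ex: "\<exists>P \<chi>. subgroup P G \<and> P \<subseteq> Q \<and> \<chi> ` P \<subseteq> carrier G \<and> K = (\<lambda>u. (u, \<chi> u)) ` P" for K
  proof -
    obtain P \<chi> where P: "subgroup P G" "P \<subseteq> Q" "\<chi> ` P \<subseteq> carrier G" "K = (\<lambda>u. (u, \<chi> u)) ` P"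
      using ex by blast
    show ?thesis unfolding P(4) fix_graph[OF fs fin Q hid P(2,3)] fix_graph[OF fs fin Q hph P(2,3)]
      by (rule marks_eq[OF fs fin Q ph P(1,2,3)])
  qed
  have "\<exists>f. bij_betw f (BXs G F) (BXs G F) \<and>
      (\<forall>g\<in>carrier H. \<forall>x\<in>BXs G F. f (act G (\<lambda>u. u) g x) = act G \<phi> g (f x))"
  proof (rule group.burnside[OF gH finH aid aph finB finB])
    show "\<forall>x\<in>BXs G F. card (fix_of (act G (\<lambda>u. u)) (BXs G F) (stab_of H (act G (\<lambda>u. u)) x)) =
                      card (fix_of (act G \<phi>) (BXs G F) (stab_of H (act G (\<lambda>u. u)) x))"
      using meq stab_graph[OF fs fin Q hid] unfolding H_def by blast
    show "\<forall>x\<in>BXs G F. card (fix_of (act G (\<lambda>u. u)) (BXs G F) (stab_of H (act G \<phi>) x)) =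
                      card (fix_of (act G \<phi>) (BXs G F) (stab_of H (act G \<phi>) x))"
      using meq stab_graph[OF fs fin Q hph] unfolding H_def by blast
  qed
  then obtain f where f: "bij_betw f (BXs G F) (BXs G F)"
    and eqv: "\<forall>g\<in>carrier H. \<forall>x\<in>BXs G F. f (act G (\<lambda>u. u) g x) = act G \<phi> g (f x)" by blast
  have fB: "f x \<in> BXs G F" if "x \<in> BXs G F" for x using f that unfolding bij_betw_def by blast
  show ?thesis unfolding biset_iso_def
  proof (intro exI conjI ballI)
    show "bij_betw f (BXs G F) (BXs G F)" by (rule f)
  next
    fix x a assume x: "x \<in> BXs G F" and a: "a \<in> Q"
    have g: "(a, \<one>) \<in> carrier H" unfolding H_def using a by simp
    have "f (act G (\<lambda>u. u) (a, \<one>) x) = act G \<phi> (a, \<one>) (f x)" using eqv g x by blast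
    then show "f (lft G a x) = lft G (\<phi> a) (f x)"
      unfolding act_def using bs_r1[OF bs x] bs_r1[OF bs fB[OF x]] by simp
  next
    fix x b assume x: "x \<in> BXs G F" and b: "b \<in> carrier G"
    have g: "(\<one>, inv b) \<in> carrier H" unfolding H_def using b subgroup.one_closed[OF Q] by simp
    have "f (act G (\<lambda>u. u) (\<one>, inv b) x) = act G \<phi> (\<one>, inv b) (f x)" using eqv g x by blast
    then show "f (rgt G x b) = rgt G (f x) b"
      unfolding act_def using bs_l1[OF bs bs_cr[OF bs x b]] bs_l1[OF bs bs_cr[OF bs fB[OF x] b]] b ph1 by simp
  qed
qed


lemma fst_bij: "bij_betw fst (A \<times> {i}) A"
  unfolding bij_betw_def inj_on_def by auto

lemma trans_sub:
  assumes Y: "transitive_subbiset G (BXs G F) (lft G) (rgt G) Y"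
  shows "\<exists>Q \<phi>. subgroup Q G \<and> \<phi> \<in> F Q (carrier G) \<and>
           biset_iso (carrier G) (carrier G) Y (lft G) (rgt G) (tb_carrier G Q \<phi>) (tb_left G) (tb_right G)"
proof -
  have sb: "subbiset G (BXs G F) (lft G) (rgt G) Y" and ne: "Y \<noteq> {}"
    and tr: "\<forall>y\<in>Y. \<forall>z\<in>Y. \<exists>s\<in>carrier G. \<exists>t\<in>carrier G. z = lft G s (rgt G y t)"
    using Y unfolding transitive_subbiset_def by auto
  have YB: "Y \<subseteq> BXs G F" and cl: "\<forall>y\<in>Y. \<forall>s\<in>carrier G. lft G s y \<in> Y \<and> rgt G y s \<in> Y"
    using sb unfolding subbiset_def by auto
  obtain y0 where y0: "y0 \<in> Y" using ne by blast
  have "y0 \<in> BXs G F" using YB y0 by blast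
  then obtain q where q: "q \<in> VV G F" "fst y0 \<in> tb_carrier G (fst q) (snd q)"
    unfolding BX_mem[OF fs fin] by blast
  interpret T: tbloc G "fst q" "snd q" by (rule VV_tbloc[OF fs fin q(1)])
  obtain x0 w0 where xw: "x0 \<in> carrier G" "w0 \<in> carrier G" "fst y0 = cls G (fst q) (snd q) x0 w0"
    using q(2) T.tb_carrier_eq by auto
  have Yeq: "Y = tb_carrier G (fst q) (snd q) \<times> {snd y0}"
  proof
    show "Y \<subseteq> tb_carrier G (fst q) (snd q) \<times> {snd y0}"
    proof
      fix z assume z: "z \<in> Y"
      then obtain s t where st: "s \<in> carrier G" "t \<in> carrier G" "z = lft G s (rgt G y0 t)" using tr y0 by blast
      have "tb_left G s (tb_right G (fst y0) t) \<in> tb_carrier G (fst q) (snd q)"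
        using tbc_left[OF fs fin q(1) tbc_right[OF fs fin q(1) q(2) st(2)] st(1)] .
      then show "z \<in> tb_carrier G (fst q) (snd q) \<times> {snd y0}" using st(3) unfolding lft_def rgt_def by simp
    qed
  next
    show "tb_carrier G (fst q) (snd q) \<times> {snd y0} \<subseteq> Y"
    proof
      fix z assume z: "z \<in> tb_carrier G (fst q) (snd q) \<times> {snd y0}"
      then obtain x y where xy: "x \<in> carrier G" "y \<in> carrier G" "fst z = cls G (fst q) (snd q) x y" "snd z = snd y0"
        using T.tb_carrier_eq by auto
      define s where "s = x \<otimes> inv x0"
      define t where "t = inv w0 \<otimes> y"
      have s: "s \<in> carrier G" and t: "t \<in> carrier G" unfolding s_def t_def using xy xw by auto
      have "lft G s (rgt G y0 t) = (cls G (fst q) (snd q) (s \<otimes> x0) (w0 \<otimes> t), snd y0)"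
        unfolding lft_def rgt_def using xw T.tb_right_cls[OF t xw(2)] T.tb_left_cls[OF s xw(1)] by simp
      also have "\<dots> = z" unfolding s_def t_def using xy xw by (simp add: m_assoc prod_eq_iff)
      finally have e: "lft G s (rgt G y0 t) = z" .
      have "rgt G y0 t \<in> Y" using cl y0 t by blast
      then have "lft G s (rgt G y0 t) \<in> Y" using cl s by blast
      then show "z \<in> Y" using e by simp
    qed
  qed
  have "biset_iso (carrier G) (carrier G) Y (lft G) (rgt G) (tb_carrier G (fst q) (snd q)) (tb_left G) (tb_right G)"
    unfolding biset_iso_def
  proof (intro exI conjI ballI)
    show "bij_betw fst Y (tb_carrier G (fst q) (snd q))" unfolding Yeq by (rule fst_bij)
  qed (simp_all add: lft_def rgt_def)
  moreover have "subgroup (fst q) G" "snd q \<in> F (fst q) (carrier G)" using q(1) unfolding VV_def by auto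
  ultimately show ?thesis by blast
qed

lemma id_sub:
  "\<exists>Y. subbiset G (BXs G F) (lft G) (rgt G) Y \<and>
     biset_iso (carrier G) (carrier G) Y (lft G) (rgt G) (tb_carrier G (carrier G) id) (tb_left G) (tb_right G)"
proof -
  define \<theta>0 where "\<theta>0 = restrict (\<lambda>u. \<one> \<otimes> u \<otimes> inv \<one>) (carrier G)"
  have th: "\<theta>0 \<in> F (carrier G) (carrier G)" unfolding \<theta>0_def
    by (rule F_conj[OF fs subgroup_self subgroup_self one_closed]) auto
  define q0 where "q0 = (carrier G, \<theta>0)"
  have q0: "q0 \<in> VV G F" unfolding q0_def VV_def using th subgroup_self by simp
  have se: "sext G F (carrier G) \<theta>0 = {}"
    unfolding sext_def VV_def using subgroup.subset by fastforce
  have "kk G F (carrier G) \<theta>0 = cc G F (card (carrier G))"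
    using kk_rec[OF fs fin, of "carrier G" \<theta>0] q0 se unfolding q0_def by simp
  then have kpos: "1 \<le> kk G F (carrier G) \<theta>0" using cc_pos[OF fs fin] by simp
  have cpos: "0 < card (carrier G)" using fin one_closed by (auto simp add: card_gt_0_iff)
  have bpos: "0 < card (carrier G) * kk G F (carrier G) \<theta>0" using kpos cpos by simp
  define Y where "Y = tb_carrier G (carrier G) \<theta>0 \<times> {0::nat}"
  have YB: "Y \<subseteq> BXs G F" unfolding Y_def BXs_def using q0 bpos unfolding q0_def by fastforce
  have sb: "subbiset G (BXs G F) (lft G) (rgt G) Y"
    unfolding subbiset_def
  proof (intro conjI ballI YB)
    fix y s assume y: "y \<in> Y" and s: "s \<in> carrier G"
    have yc: "fst y \<in> tb_carrier G (fst q0) (snd q0)" using y unfolding Y_def q0_def by auto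
    show "lft G s y \<in> Y" using tbc_left[OF fs fin q0 yc s] y unfolding Y_def q0_def lft_def by auto
    show "rgt G y s \<in> Y" using tbc_right[OF fs fin q0 yc s] y unfolding Y_def q0_def rgt_def by auto
  qed
  have rel: "tb_rel G (carrier G) \<theta>0 = tb_rel G (carrier G) id"
    unfolding tb_rel_def \<theta>0_def by auto
  have tce: "tb_carrier G (carrier G) \<theta>0 = tb_carrier G (carrier G) id"
    unfolding tb_carrier_def rel ..
  have "biset_iso (carrier G) (carrier G) Y (lft G) (rgt G) (tb_carrier G (carrier G) id) (tb_left G) (tb_right G)"
    unfolding biset_iso_def
  proof (intro exI conjI ballI)
    show "bij_betw fst Y (tb_carrier G (carrier G) id)" unfolding Y_def tce[symmetric] by (rule fst_bij)
  qed (simp_all add: lft_def rgt_def)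
  then show ?thesis using sb by blast
qed

lemma main_G:
  "\<exists>(BX :: (('a \<times> 'a) set \<times> nat) set) l r.
           left_semichar_biset G F BX l r \<and>
           (\<exists>Y. subbiset G BX l r Y \<and>
                biset_iso (carrier G) (carrier G) Y l r
                  (tb_carrier G (carrier G) id) (tb_left G) (tb_right G))"
proof (rule exI, rule exI, rule exI, rule conjI)
  show "left_semichar_biset G F (BXs G F) (lft G) (rgt G)"
    unfolding left_semichar_biset_def
    using BX_biset[OF fs fin] BX_finite[OF fs fin] trans_sub stability by blast
  show "\<exists>Y. subbiset G (BXs G F) (lft G) (rgt G) Y \<and>
                biset_iso (carrier G) (carrier G) Y (lft G) (rgt G)
                  (tb_carrier G (carrier G) id) (tb_left G) (tb_right G)" by (rule id_sub)
qed

end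
end

theorem proposition2:
  fixes p :: nat and S :: "('a, 'm) monoid_scheme"
    and F :: "'a set \<Rightarrow> 'a set \<Rightarrow> ('a \<Rightarrow> 'a) set"
  assumes "Factorial_Ring.prime p" and "finite_p_group p S" and "fusion_system S F"
  shows "\<exists>(BX :: (('a \<times> 'a) set \<times> nat) set) l r.
           left_semichar_biset S F BX l r \<and>
           (\<exists>Y. subbiset S BX l r Y \<and>
                biset_iso (carrier S) (carrier S) Y l r
                  (tb_carrier S (carrier S) id) (tb_left S) (tb_right S))"
proof -
  have g: "group S" and fin: "finite (carrier S)" using assms(2) unfolding finite_p_group_def by auto
  show ?thesis by (rule group.main_G[OF g assms(3) fin])
qed



end
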